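(* Let $M_2\ge1$, $M_1=2^{M_2-1}$, and define the $M_1\times M_2$ matrix $g_{x_1,x_2}=1-2\big(\lfloor 2^{1-x_2}(x_1-1)\rfloor \bmod 2\big)$. Then all singular values of $g$ equal $\sqrt{M_1}$, and the quantum value of $g$ equals $M_1\sqrt{M_2}$ and is attained by a quantum strategy.
   Context: The quantum value is the supremum of $\sum_{x_1,x_2}g_{x_1,x_2}\operatorname{tr}(\rho\,\mathcal A_1(x_1)\otimes\mathcal A_2(x_2))$ over finite-dimensional complex Hilbert spaces $\mathcal H_1,\mathcal H_2$, density operators $\rho$ on $\mathcal H_1\otimes\mathcal H_2$ and Hermitian operators $\mathcal A_i(x_i)$ on $\mathcal H_i$ with eigenvalues in $[-1,1]$. *)

theory Defs
  imports "HOL-Analysis.Analysis" "Jordan_Normal_Form.Matrix" "Jordan_Normal_Form.Char_Poly"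
begin

definition g_entry :: "nat \<Rightarrow> nat \<Rightarrow> real" where
  "g_entry x1 x2 = 1 - 2 * of_int (\<lfloor>2 powr (1 - real x2) * (real x1 - 1)\<rfloor> mod 2)"

text \<open>The M1 x M2 matrix g with M1 = 2^(M2-1); row i / column j correspond to x1 = i+1, x2 = j+1.\<close>
definition g_mat :: "nat \<Rightarrow> real mat" where
  "g_mat M2 = mat (2 ^ (M2 - 1)) M2 (\<lambda>(i, j). g_entry (i + 1) (j + 1))"

definition singular_values :: "real mat \<Rightarrow> real set" where
  "singular_values A =
     {sqrt l | l. eigenvalue (if dim_col A \<le> dim_row A then transpose_mat A * A
                              else A * transpose_mat A) l}"

definition mtrace :: "'a :: comm_ring_1 mat \<Rightarrow> 'a" where
  "mtrace A = (\<Sum>i<dim_row A. A $$ (i, i))"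

definition adj :: "complex mat \<Rightarrow> complex mat" where
  "adj A = mat (dim_col A) (dim_row A) (\<lambda>(i, j). cnj (A $$ (j, i)))"

definition hermitian :: "complex mat \<Rightarrow> bool" where
  "hermitian A \<longleftrightarrow> A \<in> carrier_mat (dim_row A) (dim_row A) \<and> adj A = A"

definition kron :: "complex mat \<Rightarrow> complex mat \<Rightarrow> complex mat" where
  "kron A B = mat (dim_row A * dim_row B) (dim_col A * dim_col B)
     (\<lambda>(r, c). A $$ (r div dim_row B, c div dim_col B) * B $$ (r mod dim_row B, c mod dim_col B))"

definition density_op :: "nat \<Rightarrow> complex mat \<Rightarrow> bool" where
  "density_op d \<rho> \<longleftrightarrow> \<rho> \<in> carrier_mat d d \<and> hermitian \<rho> \<and>
     (\<forall>v \<in> carrier_vec d. Re (conjugate v \<bullet> (\<rho> *\<^sub>v v)) \<ge> 0) \<and> mtrace \<rho> = 1"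

definition observable :: "nat \<Rightarrow> complex mat \<Rightarrow> bool" where
  "observable d A \<longleftrightarrow> A \<in> carrier_mat d d \<and> hermitian A \<and>
     (\<forall>l. eigenvalue A l \<longrightarrow> l \<in> \<real> \<and> -1 \<le> Re l \<and> Re l \<le> 1)"

definition quantum_strategy ::
  "nat \<Rightarrow> nat \<Rightarrow> nat \<Rightarrow> nat \<Rightarrow> complex mat \<Rightarrow> (nat \<Rightarrow> complex mat) \<Rightarrow> (nat \<Rightarrow> complex mat) \<Rightarrow> bool" where
  "quantum_strategy M1 M2 d1 d2 \<rho> A1 A2 \<longleftrightarrow> density_op (d1 * d2) \<rho> \<and>
     (\<forall>x1\<in>{1..M1}. observable d1 (A1 x1)) \<and> (\<forall>x2\<in>{1..M2}. observable d2 (A2 x2))"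

definition strategy_value :: "real mat \<Rightarrow> complex mat \<Rightarrow> (nat \<Rightarrow> complex mat) \<Rightarrow> (nat \<Rightarrow> complex mat) \<Rightarrow> real" where
  "strategy_value g \<rho> A1 A2 =
     (\<Sum>x1\<in>{1..dim_row g}. \<Sum>x2\<in>{1..dim_col g}.
        g $$ (x1 - 1, x2 - 1) * Re (mtrace (\<rho> * kron (A1 x1) (A2 x2))))"

definition quantum_value :: "real mat \<Rightarrow> ereal" where
  "quantum_value g = (SUP s \<in> {(d1, d2, \<rho>, A1, A2). quantum_strategy (dim_row g) (dim_col g) d1 d2 \<rho> A1 A2}.
       ereal (case s of (d1, d2, \<rho>, A1, A2) \<Rightarrow> strategy_value g \<rho> A1 A2))"

end

theory Submission imports Defs "HOL-Real_Asymp.Real_Asymp" "Jordan_Normal_Form.Spectral_Radius" begin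

no_notation vec_nth (infixl "$" 90)
no_notation inner (infix "\<bullet>" 70)

definition cip :: "complex vec \<Rightarrow> complex vec \<Rightarrow> complex" where
  "cip x y = (\<Sum>i<dim_vec x. cnj (x$i) * y$i)"
definition nrm2 :: "complex vec \<Rightarrow> real" where
  "nrm2 x = (\<Sum>i<dim_vec x. (cmod (x$i))^2)"

lemma mv_index: "A \<in> carrier_mat n m \<Longrightarrow> y \<in> carrier_vec m \<Longrightarrow> i < n \<Longrightarrow>
   (A *\<^sub>v y)$i = (\<Sum>j<m. A$$(i,j) * y$j)"
  by (auto simp: scalar_prod_def lessThan_atLeast0 intro!: sum.cong)

lemma adj_entry: assumes "adj A = A" "A \<in> carrier_mat n n" "i<n" "j<n"
  shows "A$$(i,j) = cnj (A$$(j,i))"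
proof -
  have 1: "adj A $$ (i,j) = cnj (A$$(j,i))" using assms(2-4) by (simp add: adj_def)
  show ?thesis using 1 assms(1) by simp
qed

lemma herm_ip: assumes A: "A \<in> carrier_mat n n" and h: "adj A = A"
  and x: "x \<in> carrier_vec n" and y: "y \<in> carrier_vec n"
  shows "cip x (A *\<^sub>v y) = cip (A *\<^sub>v x) y"
proof -
  have mx: "\<And>i. i<n \<Longrightarrow> (A *\<^sub>v x)$i = (\<Sum>j<n. A$$(i,j) * x$j)" using mv_index[OF A x] .
  have my: "\<And>i. i<n \<Longrightarrow> (A *\<^sub>v y)$i = (\<Sum>j<n. A$$(i,j) * y$j)" using mv_index[OF A y] .
  have "cip x (A *\<^sub>v y) = (\<Sum>i<n. \<Sum>j<n. cnj (x$i) * A$$(i,j) * y$j)"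
    using A x y by (simp add: cip_def my sum_distrib_left mult.assoc del: index_mult_mat_vec)
  also have "\<dots> = (\<Sum>j<n. \<Sum>i<n. cnj (x$i) * A$$(i,j) * y$j)" by (rule sum.swap)
  also have "\<dots> = (\<Sum>j<n. \<Sum>i<n. cnj (A$$(j,i)) * cnj (x$i) * y$j)"
  proof -
    have e: "\<And>i j. i<n \<Longrightarrow> j<n \<Longrightarrow> cnj (A$$(j,i)) = A$$(i,j)"
      using adj_entry[OF h A] complex_cnj_cnj by metis
    show ?thesis
    proof (rule sum.cong[OF refl], rule sum.cong[OF refl])
      fix j i assume "j \<in> {..<n}" "i \<in> {..<n}"
      hence "cnj (A$$(j,i)) = A$$(i,j)" using e by simp
      thus "cnj (x$i) * A$$(i,j) * y$j = cnj (A$$(j,i)) * cnj (x$i) * y$j" by simp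
    qed
  qed
  also have "\<dots> = (\<Sum>j<n. cnj (\<Sum>i<n. A$$(j,i) * x$i) * y$j)"
    by (simp add: cnj_sum sum_distrib_right)
  also have "\<dots> = cip (A *\<^sub>v x) y"
    unfolding cip_def using A by (intro sum.cong) (simp_all add: mx del: index_mult_mat_vec)
  finally show ?thesis .
qed

lemma cip_self: "cip x x = of_real (nrm2 x)"
  unfolding cip_def nrm2_def of_real_sum
  by (intro sum.cong refl) (simp only: complex_norm_square mult.commute)

lemma nrm2_nonneg: "nrm2 x \<ge> 0" by (simp add: nrm2_def sum_nonneg)

lemma cip_CS: assumes "dim_vec y = dim_vec x"
  shows "cmod (cip x y) \<le> sqrt (nrm2 x) * sqrt (nrm2 y)"
proof -
  have "cmod (cip x y) \<le> (\<Sum>i<dim_vec x. cmod (cnj (x$i) * y$i))"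
    unfolding cip_def by (rule norm_sum)
  also have "\<dots> = (\<Sum>i<dim_vec x. \<bar>cmod (x$i)\<bar> * \<bar>cmod (y$i)\<bar>)" by (simp add: norm_mult)
  also have "\<dots> \<le> L2_set (\<lambda>i. cmod (x$i)) {..<dim_vec x} * L2_set (\<lambda>i. cmod (y$i)) {..<dim_vec x}"
    by (rule L2_set_mult_ineq)
  also have "\<dots> = sqrt (nrm2 x) * sqrt (nrm2 y)" using assms by (simp add: L2_set_def nrm2_def)
  finally show ?thesis .
qed

lemma pow_commute: "A \<in> carrier_mat n n \<Longrightarrow> A ^\<^sub>m k * A = A * A ^\<^sub>m k"
proof (induction k)
  case 0 thus ?case by simp
next
  case (Suc k)
  have "A ^\<^sub>m Suc k * A = (A ^\<^sub>m k * A) * A" by simp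
  also have "\<dots> = (A * A ^\<^sub>m k) * A" using Suc by simp
  also have "\<dots> = A * (A ^\<^sub>m k * A)" using Suc.prems by (intro assoc_mult_mat[of _ n n _ n _ n]) auto
  finally show ?case by simp
qed


lemma nrm2_zero: assumes "nrm2 v = 0" "v \<in> carrier_vec n" shows "v = 0\<^sub>v n"
proof (rule eq_vecI)
  fix i assume i: "i < dim_vec (0\<^sub>v n)"
  have "\<forall>i\<in>{..<dim_vec v}. (cmod (v$i))^2 = 0"
    using assms(1) unfolding nrm2_def by (subst sum_nonneg_eq_0_iff[symmetric]) auto
  thus "v $ i = 0\<^sub>v n $ i" using i assms(2) by auto
qed (use assms in auto)

lemma contraction:
  assumes A: "A \<in> carrier_mat n n" and h: "adj A = A"
   and ev: "\<And>l. eigenvalue A l \<Longrightarrow> cmod l \<le> 1"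
   and v: "v \<in> carrier_vec n"
  shows "nrm2 (A *\<^sub>v v) \<le> nrm2 v"
proof (rule ccontr)
  assume "\<not> ?thesis"
  hence gt: "nrm2 (A *\<^sub>v v) > nrm2 v" by simp
  have n0: "n > 0"
  proof (rule ccontr)
    assume "\<not> n > 0" hence "n = 0" by simp
    thus False using gt A v by (simp add: nrm2_def)
  qed
  have sr: "spectral_radius A \<le> 1"
  proof -
    obtain s where s: "s \<in> spectrum A" "spectral_radius A = norm s"
      using spectral_radius_mem_max(1)[OF A n0] by auto
    thus ?thesis using ev by (simp add: spectrum_def)
  qed
  obtain c1 c2 where bnd: "\<And>k. norm_bound (A ^\<^sub>m k) (c1 + c2 * of_nat k ^ (n - 1))"
    using spectral_radius_jnf_norm_bound_le_1_upper_triangular[OF A sr] by blast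
  define w where "w k = (A ^\<^sub>m k) *\<^sub>v v" for k
  have pc: "A ^\<^sub>m k \<in> carrier_mat n n" for k using A by simp
  have wc: "w k \<in> carrier_vec n" for k unfolding w_def by (rule mult_mat_vec_carrier[OF pc v])
  have wS: "w (Suc k) = A *\<^sub>v w k" for k
  proof -
    have "w (Suc k) = (A * A ^\<^sub>m k) *\<^sub>v v" unfolding w_def using pow_commute[OF A] by simp
    also have "\<dots> = A *\<^sub>v w k" unfolding w_def by (rule assoc_mult_mat_vec[OF A pc v])
    finally show ?thesis .
  qed
  have w0: "w 0 = v" unfolding w_def using A v by simp
  define N where "N k = sqrt (nrm2 (w k))" for k
  have Nn: "N k \<ge> 0" for k unfolding N_def by (simp add: nrm2_nonneg)
  have log: "N (Suc k) ^ 2 \<le> N k * N (Suc (Suc k))" for k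
  proof -
    have "N (Suc k) ^ 2 = nrm2 (w (Suc k))" unfolding N_def by (simp add: nrm2_nonneg)
    also have "\<dots> = Re (cip (w (Suc k)) (w (Suc k)))" by (simp add: cip_self)
    also have "cip (w (Suc k)) (w (Suc k)) = cip (A *\<^sub>v w k) (w (Suc k))" by (simp add: wS)
    also have "\<dots> = cip (w k) (A *\<^sub>v w (Suc k))" using herm_ip[OF A h wc wc] by simp
    also have "\<dots> = cip (w k) (w (Suc (Suc k)))" by (simp add: wS)
    also have "Re \<dots> \<le> cmod \<dots>" by (rule complex_Re_le_cmod)
    also have "\<dots> \<le> N k * N (Suc (Suc k))" unfolding N_def
      by (rule cip_CS) (metis carrier_vecD wc)
    finally show ?thesis .
  qed
  have N01: "N 0 < N 1" unfolding N_def using gt w0 wS[of 0] by simp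
  have N0pos: "N 0 > 0"
  proof (rule ccontr)
    assume "\<not> N 0 > 0" hence "N 0 = 0" using Nn[of 0] by simp
    hence "nrm2 v = 0" unfolding N_def using w0 nrm2_nonneg[of v] by simp
    hence "v = 0\<^sub>v n" using nrm2_zero v by blast
    hence "N 1 = 0" unfolding N_def using wS[of 0] w0 A by (simp add: nrm2_def)
    thus False using N01 \<open>N 0 = 0\<close> by simp
  qed
  define r where "r = N 1 / N 0"
  have r1: "r > 1" unfolding r_def using N01 N0pos by simp
  have grow: "N (Suc k) \<ge> r * N k \<and> N k > 0" for k
  proof (induction k)
    case 0 thus ?case unfolding r_def using N0pos by simp
  next
    case (Suc k)
    hence a: "N (Suc k) \<ge> r * N k" and b: "N k > 0" by auto
    have c: "N (Suc k) > 0" using a b r1 by (smt (verit) mult_pos_pos)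
    have "N (Suc k) * (r * N k) \<le> N (Suc k) * N (Suc k)" using a c by simp
    also have "\<dots> \<le> N k * N (Suc (Suc k))" using log[of k] by (simp add: power2_eq_square)
    finally have "N k * (r * N (Suc k)) \<le> N k * N (Suc (Suc k))" by (simp add: ac_simps)
    hence "r * N (Suc k) \<le> N (Suc (Suc k))" using b by simp
    thus ?case using c by simp
  qed
  have lower: "N k \<ge> r ^ k * N 0" for k
  proof (induction k)
    case 0 thus ?case by simp
  next
    case (Suc k)
    have "r ^ Suc k * N 0 = r * (r^k * N 0)" by simp
    also have "\<dots> \<le> r * N k" using Suc r1 by simp
    also have "\<dots> \<le> N (Suc k)" using grow[of k] by simp
    finally show ?case .
  qed
  define S where "S = (\<Sum>j<n. cmod (v$j))"
  have upper: "N k \<le> real n * ((c1 + c2 * real k ^ (n - 1)) * S)" for k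
  proof -
    let ?c = "c1 + c2 * real k ^ (n - 1)"
    have ent: "cmod ((A ^\<^sub>m k) $$ (i,j)) \<le> ?c" if "i<n" "j<n" for i j
      using bnd[of k] that pc[of k] A unfolding norm_bound_def by (auto split: if_splits)
    have wi: "cmod (w k $ i) \<le> ?c * S" if i: "i < n" for i
    proof -
      have "w k $ i = (\<Sum>j<n. (A ^\<^sub>m k)$$(i,j) * v$j)" unfolding w_def
        using mv_index[OF pc v i] .
      hence "cmod (w k $ i) \<le> (\<Sum>j<n. cmod ((A ^\<^sub>m k)$$(i,j) * v$j))"
        by (simp add: norm_sum)
      also have "\<dots> \<le> (\<Sum>j<n. ?c * cmod (v$j))"
        proof (intro sum_mono)
          fix j assume "j \<in> {..<n}"
          thus "cmod ((A ^\<^sub>m k)$$(i,j) * v$j) \<le> ?c * cmod (v$j)"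
            unfolding norm_mult by (intro mult_right_mono ent) (auto simp: i)
        qed
      finally show ?thesis by (simp add: S_def sum_distrib_left)
    qed
    have "N k = L2_set (\<lambda>i. cmod (w k $ i)) {..<n}"
      unfolding N_def nrm2_def L2_set_def using wc[of k] by simp
    also have "\<dots> \<le> (\<Sum>i<n. \<bar>cmod (w k $ i)\<bar>)" by (rule L2_set_le_sum_abs)
    also have "\<dots> \<le> (\<Sum>i<n. ?c * S)"
    proof (intro sum_mono)
      fix i assume "i\<in>{..<n}"
      thus "\<bar>cmod (w k $ i)\<bar> \<le> ?c * S" using wi[of i] by simp
    qed
    finally show ?thesis by simp
  qed
  have lim: "(\<lambda>k. real n * ((c1 + c2 * real k ^ (n - 1)) * S) / r ^ k) \<longlonglongrightarrow> 0"
    using r1 by real_asymp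
  have "eventually (\<lambda>k. real n * ((c1 + c2 * real k ^ (n - 1)) * S) / r ^ k < N 0) sequentially"
    using order_tendstoD(2)[OF lim N0pos] .
  then obtain k where "real n * ((c1 + c2 * real k ^ (n - 1)) * S) / r ^ k < N 0"
    by (auto simp: eventually_sequentially)
  moreover have "r ^ k * N 0 \<le> real n * ((c1 + c2 * real k ^ (n - 1)) * S)"
    using lower[of k] upper[of k] by simp
  ultimately show False using r1 by (simp add: field_simps)
qed


definition sg :: "nat \<Rightarrow> nat \<Rightarrow> real" where
  "sg i j = (if odd (i div 2^j) then -1 else 1)"

lemma g_entry_sg: "g_entry (i+1) (j+1) = sg i j"
proof -
  have "2 powr (1 - real (j+1)) * (real (i+1) - 1) = real i / real (2^j)"
    by (simp add: powr_minus powr_realpow divide_inverse)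
  hence fl: "\<lfloor>2 powr (1 - real (j+1)) * (real (i+1) - 1)\<rfloor> = int (i div 2^j)"
    by (simp only: floor_divide_of_nat_eq)
  show ?thesis
  proof (cases "odd (i div 2^j)")
    case True
    hence "int (i div 2^j) mod 2 = 1" by presburger
    thus ?thesis unfolding g_entry_def sg_def fl using True by simp
  next
    case False
    hence "int (i div 2^j) mod 2 = 0" by presburger
    thus ?thesis unfolding g_entry_def sg_def fl using False by simp
  qed
qed

lemma sg_sq: "sg i j * sg i j = 1" by (simp add: sg_def)

lemma sg_small: "i < 2^m \<Longrightarrow> m \<le> j \<Longrightarrow> sg i j = 1"
proof -
  assume "i < 2^m" "m \<le> j"
  hence "i < 2^j" using power_increasing[of m j "2::nat"] by linarith
  thus ?thesis by (simp add: sg_def)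
qed

lemma sg_add: assumes i: "i < 2^m"
  shows "sg (i + 2^m) j = (if j < m then sg i j else if j = m then -1 else 1)"
proof (cases "j < m")
  case True
  have d: "(2::nat)^j dvd 2^m" using True by (simp add: le_imp_power_dvd)
  have "(i + 2^m) div 2^j = i div 2^j + 2^m div 2^j"
    by (rule div_plus_div_distrib_dvd_right[OF d])
  moreover have "(2::nat)^m div 2^j = 2^(m-j)" using True by (simp add: power_diff)
  moreover have "even ((2::nat)^(m-j))" using True by simp
  ultimately show ?thesis using True by (simp add: sg_def)
next
  case False
  show ?thesis
  proof (cases "j = m")
    case True
    have "(i + 2^m) div 2^m = 1" using i by simp
    thus ?thesis using True by (simp add: sg_def)
  next
    case F2: False
    hence "m < j" using False by simp
    hence "(2::nat)^(Suc m) \<le> 2^j" by (intro power_increasing) auto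
    hence "i + 2^m < 2^j" using i by simp
    thus ?thesis using False F2 by (simp add: sg_def)
  qed
qed

lemma sum_double: fixes n :: nat shows "(\<Sum>i<n+n. f i) = (\<Sum>i<n. f i) + (\<Sum>i<n. f (i+n))"
proof -
  have "(\<Sum>i<n+n. f i) = (\<Sum>i\<in>{0..<n}. f i) + (\<Sum>i\<in>{n..<n+n}. f i)"
    by (simp add: lessThan_atLeast0 sum.atLeastLessThan_concat)
  also have "(\<Sum>i\<in>{n..<n+n}. f i) = (\<Sum>i\<in>{0..<n}. f (i+n))"
    using sum.shift_bounds_nat_ivl[of f 0 n n] by simp
  finally show ?thesis by (simp add: lessThan_atLeast0)
qed

lemma sg_orth0: "\<forall>j k. j < k \<longrightarrow> j < m \<longrightarrow> (\<Sum>i<2^m. sg i j * sg i k) = 0"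
proof (induction m)
  case 0 thus ?case by simp
next
  case (Suc m)
  show ?case
  proof (intro allI impI)
    fix j k assume jk: "j < k" and jm: "j < Suc m"
    have split: "(\<Sum>i<2^Suc m. sg i j * sg i k) =
       (\<Sum>i<2^m. sg i j * sg i k) + (\<Sum>i<2^m. sg (i+2^m) j * sg (i+2^m) k)"
      using sum_double[where n="2^m" and f="\<lambda>i. sg i j * sg i k"] by (simp add: mult_2)
    have sm: "\<And>i l. i \<in> {..<2^m} \<Longrightarrow> m \<le> l \<Longrightarrow> sg i l = 1" using sg_small by auto
    show "(\<Sum>i<2^Suc m. sg i j * sg i k) = 0"
    proof (cases "j < m")
      case True
      have z: "(\<Sum>i<2^m. sg i j) = 0"
        using Suc.IH True sm[of _ m] by (metis (no_types, lifting) mult.right_neutral order_refl sum.cong)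
      show ?thesis
      proof (cases "k < m")
        case True
        have "(\<Sum>i<2^m. sg (i+2^m) j * sg (i+2^m) k) = (\<Sum>i<2^m. sg i j * sg i k)"
          using True \<open>j<m\<close> by (intro sum.cong) (auto simp: sg_add)
        thus ?thesis using split Suc.IH jk \<open>j<m\<close> by simp
      next
        case False
        have a: "(\<Sum>i<2^m. sg i j * sg i k) = (\<Sum>i<2^m. sg i j)"
          using False by (intro sum.cong) (auto simp: sm)
        have b: "(\<Sum>i<2^m. sg (i+2^m) j * sg (i+2^m) k) = (\<Sum>i<2^m. sg i j * (if k = m then -1 else 1))"
          using False \<open>j<m\<close> by (intro sum.cong) (auto simp: sg_add)
        show ?thesis using split a b z by (simp add: sum_distrib_right[symmetric])
      qed
    next
      case False
      hence jm': "j = m" using jm by simp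
      hence km: "m < k" using jk by simp
      have a: "(\<Sum>i<2^m. sg i j * sg i k) = (\<Sum>i<(2::nat)^m. 1)"
        using jm' km by (intro sum.cong) (auto simp: sm)
      have b: "(\<Sum>i<2^m. sg (i+2^m) j * sg (i+2^m) k) = (\<Sum>i<(2::nat)^m. -1)"
        using jm' km by (intro sum.cong) (auto simp: sg_add)
      show ?thesis using split a b by simp
    qed
  qed
qed

lemma sg_orth: assumes "j < Suc m" "k < Suc m"
  shows "(\<Sum>i<2^m. sg i j * sg i k) = (if j = k then 2^m else 0)"
proof (cases "j = k")
  case True thus ?thesis by (simp add: sg_sq)
next
  case False
  show ?thesis
  proof (cases "j < k")
    case True
    hence "j < m" using assms by simp
    thus ?thesis using sg_orth0 True False by simp
  next
    case F: False
    hence "k < j" "k < m" using assms False by auto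
    hence "(\<Sum>i<2^m. sg i k * sg i j) = 0" using sg_orth0[of m] by blast
    thus ?thesis using False by (simp add: mult.commute)
  qed
qed

lemma g_entry_sg': "g_entry (Suc i) (Suc j) = sg i j" using g_entry_sg[of i j] by simp

lemma g_mat_entry: "i < 2^(M2-1) \<Longrightarrow> j < M2 \<Longrightarrow> g_mat M2 $$ (i,j) = sg i j"
  by (simp add: g_mat_def g_entry_sg')

lemma g_mat_dims: "dim_row (g_mat M2) = 2^(M2-1)" "dim_col (g_mat M2) = M2"
  by (simp_all add: g_mat_def)


lemma pow_ge: "M2 \<ge> 1 \<Longrightarrow> M2 \<le> (2::nat)^(M2-1)"
proof -
  assume "M2 \<ge> 1"
  have "M2 - 1 < 2^(M2-1)" by (rule less_exp)
  thus ?thesis using \<open>M2 \<ge> 1\<close> by linarith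
qed

lemma gtg: assumes "M2 \<ge> 1"
  shows "transpose_mat (g_mat M2) * g_mat M2 = real (2^(M2-1)) \<cdot>\<^sub>m 1\<^sub>m M2"
proof (rule eq_matI)
  fix j k assume j: "j < dim_row (real (2^(M2-1)) \<cdot>\<^sub>m 1\<^sub>m M2)" and k: "k < dim_col (real (2^(M2-1)) \<cdot>\<^sub>m 1\<^sub>m M2)"
  hence j': "j < Suc (M2-1)" and k': "k < Suc (M2-1)" using assms by auto
  have "(transpose_mat (g_mat M2) * g_mat M2) $$ (j,k) = (\<Sum>i<2^(M2-1). sg i j * sg i k)"
    using j k by (simp add: scalar_prod_def g_mat_dims lessThan_atLeast0 g_mat_entry)
  also have "\<dots> = (if j = k then 2^(M2-1) else 0)" by (rule sg_orth[OF j' k'])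
  finally show "(transpose_mat (g_mat M2) * g_mat M2) $$ (j,k) = (real (2^(M2-1)) \<cdot>\<^sub>m 1\<^sub>m M2) $$ (j,k)"
    using j k by simp
qed (simp_all add: g_mat_dims)

lemma eig_scalar: assumes "eigenvalue ((c::real) \<cdot>\<^sub>m 1\<^sub>m n) l" shows "l = c"
proof -
  obtain v where v: "v \<in> carrier_vec n" "v \<noteq> 0\<^sub>v n" "(c \<cdot>\<^sub>m 1\<^sub>m n) *\<^sub>v v = l \<cdot>\<^sub>v v"
    using assms unfolding eigenvalue_def eigenvector_def by auto
  obtain i where i: "i < n" "v $ i \<noteq> 0"
    using v(1,2) by (metis carrier_vecD eq_vecI index_zero_vec(1) index_zero_vec(2))
  have "((c \<cdot>\<^sub>m 1\<^sub>m n) *\<^sub>v v) $ i = c * v $ i" using v(1) i(1) by simp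
  moreover have "(l \<cdot>\<^sub>v v) $ i = l * v $ i" using v(1) i(1) by simp
  ultimately show ?thesis using v(3) i(2) by simp
qed

lemma sing_vals: assumes "M2 \<ge> 1" "\<sigma> \<in> singular_values (g_mat M2)"
  shows "\<sigma> = sqrt (real (2^(M2-1)))"
proof -
  have "dim_col (g_mat M2) \<le> dim_row (g_mat M2)" using pow_ge[OF assms(1)] by (simp add: g_mat_dims)
  then obtain l where "\<sigma> = sqrt l" "eigenvalue (real (2^(M2-1)) \<cdot>\<^sub>m 1\<^sub>m M2) l"
    using assms(2) unfolding singular_values_def gtg[OF assms(1)] by auto
  thus ?thesis using eig_scalar by simp
qed


definition qf :: "(nat \<Rightarrow> nat \<Rightarrow> complex) \<Rightarrow> nat \<Rightarrow> (nat \<Rightarrow> complex) \<Rightarrow> complex" where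
  "qf P n x = (\<Sum>a<n. \<Sum>b<n. cnj (x a) * P a b * x b)"

definition dl :: "nat \<Rightarrow> nat \<Rightarrow> complex" where "dl k i = (if i = k then 1 else 0)"

lemma sum_dl_r: "k < n \<Longrightarrow> (\<Sum>b<n. f b * dl k b) = f k"
proof -
  assume k: "k < n"
  have "(\<Sum>b<n. f b * dl k b) = (\<Sum>b<n. if b = k then f b else 0)"
    by (intro sum.cong refl) (simp add: dl_def)
  also have "\<dots> = f k" using k by (simp add: sum.delta')
  finally show ?thesis .
qed

lemma sum_dl_l: "k < n \<Longrightarrow> (\<Sum>b<n. dl k b * f b) = f k"
  using sum_dl_r[of k n f] by (simp add: mult.commute)

lemma qf_expand: assumes k: "k < n"
  shows "qf P n (\<lambda>i. v i + t * dl k i) = qf P n v + t * (\<Sum>a<n. cnj (v a) * P a k)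
     + cnj t * (\<Sum>b<n. P k b * v b) + cnj t * t * P k k"
proof -
  have "qf P n (\<lambda>i. v i + t * dl k i) = (\<Sum>a<n. \<Sum>b<n. cnj (v a) * P a b * v b
      + t * (cnj (v a) * P a b * dl k b) + cnj t * (dl k a * (P a b * v b))
      + cnj t * t * (dl k a * (P a b * dl k b)))"
    unfolding qf_def by (intro sum.cong refl) (simp add: dl_def algebra_simps)
  also have "\<dots> = qf P n v + t * (\<Sum>a<n. \<Sum>b<n. cnj (v a) * P a b * dl k b)
      + cnj t * (\<Sum>a<n. dl k a * (\<Sum>b<n. P a b * v b))
      + cnj t * t * (\<Sum>a<n. dl k a * (\<Sum>b<n. P a b * dl k b))"
    unfolding qf_def by (simp add: sum.distrib sum_distrib_left)
  also have "(\<Sum>a<n. \<Sum>b<n. cnj (v a) * P a b * dl k b) = (\<Sum>a<n. cnj (v a) * P a k)"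
    using k by (intro sum.cong refl) (rule sum_dl_r)
  also have "(\<Sum>a<n. dl k a * (\<Sum>b<n. P a b * v b)) = (\<Sum>b<n. P k b * v b)"
    using k by (rule sum_dl_l)
  also have "(\<Sum>a<n. dl k a * (\<Sum>b<n. P a b * dl k b)) = P k k"
    using k by (simp add: sum_dl_l sum_dl_r)
  finally show ?thesis .
qed


definition hermf :: "(nat \<Rightarrow> nat \<Rightarrow> complex) \<Rightarrow> nat \<Rightarrow> bool" where
  "hermf P n \<longleftrightarrow> (\<forall>a<n. \<forall>b<n. P a b = cnj (P b a))"
definition psdf :: "(nat \<Rightarrow> nat \<Rightarrow> complex) \<Rightarrow> nat \<Rightarrow> bool" where
  "psdf P n \<longleftrightarrow> (\<forall>x. 0 \<le> Re (qf P n x))"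

lemma qf_dl: "k < n \<Longrightarrow> qf P n (dl k) = P k k"
  using qf_expand[of k n P "\<lambda>_. 0" 1] by (simp add: qf_def)

lemma psd_diag: "psdf P n \<Longrightarrow> k < n \<Longrightarrow> 0 \<le> Re (P k k)"
  using qf_dl[of k n P] unfolding psdf_def by metis

lemma herm_diag: assumes "hermf P n" "k < n" shows "P k k = of_real (Re (P k k))"
proof -
  have "P k k = cnj (P k k)" using assms unfolding hermf_def by blast
  hence "Im (P k k) = 0" by (metis cnj.simps(2) neg_equal_zero)
  thus ?thesis by (simp add: complex_eqI)
qed

lemma psd_zero_col: assumes h: "hermf P n" and p: "psdf P n" and k: "k < n" and a: "a < n"
  and z: "P k k = 0" shows "P a k = 0"
proof (rule ccontr)
  assume nz: "P a k \<noteq> 0"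
  define z where "z = P a k"
  have zk: "P k a = cnj z" using h k a unfolding hermf_def z_def by blast
  define s where "s = (Re (P a a) + 1) / (cmod z)^2"
  have zpos: "(cmod z)^2 > 0" using nz z_def by simp
  have sz: "s * (cmod z)^2 = Re (P a a) + 1" unfolding s_def using zpos by simp
  define t where "t = - (of_real s * cnj z)"
  have e1: "(\<Sum>i<n. cnj (dl a i) * P i k) = z"
  proof -
    have "(\<Sum>i<n. cnj (dl a i) * P i k) = (\<Sum>i<n. dl a i * P i k)"
      by (intro sum.cong refl) (simp add: dl_def)
    also have "\<dots> = z" using sum_dl_l[OF a] z_def by simp
    finally show ?thesis .
  qed
  have e2: "(\<Sum>b<n. P k b * dl a b) = cnj z" using sum_dl_r[OF a] zk by simp
  have "qf P n (\<lambda>i. dl a i + t * dl k i) = P a a + t * z + cnj t * cnj z"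
    using qf_expand[OF k, of P "dl a" t] e1 e2 z qf_dl[OF a] by simp
  also have "\<dots> = P a a - 2 * of_real s * (z * cnj z)" unfolding t_def by (simp add: algebra_simps)
  also have "\<dots> = P a a - 2 * of_real (s * (cmod z)^2)" by (subst complex_norm_square[symmetric], simp only: of_real_mult mult.assoc)
  finally have "Re (qf P n (\<lambda>i. dl a i + t * dl k i)) = Re (P a a) - 2 * (s * (cmod z)^2)" by simp
  also have "\<dots> < 0" using sz psd_diag[OF p a] by simp
  finally show False using p unfolding psdf_def by (meson not_less)
qed

lemma chol_aux:
  "k \<le> n \<Longrightarrow> hermf P n \<Longrightarrow> psdf P n \<Longrightarrow> (\<forall>a<n. \<forall>b<n. (k \<le> a \<or> k \<le> b) \<longrightarrow> P a b = 0)
   \<Longrightarrow> \<exists>r. \<forall>a<n. \<forall>b<n. P a b = (\<Sum>m<k. r m a * cnj (r m b))"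
proof (induction k arbitrary: P)
  case 0 thus ?case by auto
next
  case (Suc k)
  note h = Suc.prems(2) and ps = Suc.prems(3) and sup = Suc.prems(4)
  have k: "k < n" using Suc.prems(1) by simp
  define p where "p = Re (P k k)"
  have pk: "P k k = of_real p" unfolding p_def using herm_diag[OF h k] .
  have p0: "p \<ge> 0" unfolding p_def using psd_diag[OF ps k] .
  show ?case
  proof (cases "p = 0")
    case True
    hence col: "P a k = 0" if "a < n" for a using psd_zero_col[OF h ps k that] pk by simp
    have row: "P k b = 0" if "b < n" for b
    proof -
      have "P k b = cnj (P b k)" using h k that unfolding hermf_def by blast
      thus ?thesis using col[OF that] by simp
    qed
    have "\<forall>a<n. \<forall>b<n. (k \<le> a \<or> k \<le> b) \<longrightarrow> P a b = 0"
    proof (intro allI impI)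
      fix a b assume "a < n" "b < n" "k \<le> a \<or> k \<le> b"
      thus "P a b = 0" using sup col row by (cases "a = k"; cases "b = k") auto
    qed
    then obtain r where r: "\<forall>a<n. \<forall>b<n. P a b = (\<Sum>m<k. r m a * cnj (r m b))"
      using Suc.IH[of P] Suc.prems k by auto
    show ?thesis
      by (rule exI[of _ "r(k := (\<lambda>_. 0))"]) (simp add: r)
  next
    case False
    hence pp: "p > 0" using p0 by simp
    define q where "q = sqrt p"
    have qp: "q > 0" "q * q = p" unfolding q_def using pp by simp_all
    define c where "c a = P a k / of_real q" for a
    define P' where "P' a b = P a b - c a * cnj (c b)" for a b
    have ckb: "c k * cnj (c b) = P k b" if "b < n" for b
    proof -
      have "P k b = cnj (P b k)" using h that k unfolding hermf_def by blast
      hence "cnj (P b k) = P k b" by simp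
      hence "c k * cnj (c b) = of_real p * P k b / (of_real q * of_real q)"
        unfolding c_def pk by simp
      also have "\<dots> = P k b" using qp pp by (simp flip: of_real_mult)
      finally show ?thesis .
    qed
    have h': "hermf P' n" unfolding hermf_def
    proof (intro allI impI)
      fix a b assume "a < n" "b < n"
      hence "P a b = cnj (P b a)" using h unfolding hermf_def by blast
      thus "P' a b = cnj (P' b a)" unfolding P'_def by simp
    qed
    have sup': "\<forall>a<n. \<forall>b<n. (k \<le> a \<or> k \<le> b) \<longrightarrow> P' a b = 0"
    proof (intro allI impI)
      fix a b assume ab: "a < n" "b < n" and kab: "k \<le> a \<or> k \<le> b"
      have ca: "Suc k \<le> a \<Longrightarrow> c a = 0" using sup ab k unfolding c_def by simp
      have cb: "Suc k \<le> b \<Longrightarrow> c b = 0" using sup ab k unfolding c_def by simp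
      show "P' a b = 0"
      proof (cases "a = k")
        case True thus ?thesis unfolding P'_def using ckb ab by simp
      next
        case F1: False
        show ?thesis
        proof (cases "b = k")
          case True
          have "c a * cnj (c k) = cnj (c k * cnj (c a))" by simp
          also have "\<dots> = cnj (P k a)" using ckb ab by simp
          also have "\<dots> = P a k"
          proof -
            have "P a k = cnj (P k a)" using h ab k unfolding hermf_def by blast
            thus ?thesis by simp
          qed
          finally show ?thesis unfolding P'_def using True by simp
        next
          case False
          hence "Suc k \<le> a \<or> Suc k \<le> b" using kab F1 by auto
          thus ?thesis unfolding P'_def using sup ab ca cb by auto
        qed
      qed
    qed
    have ps': "psdf P' n" unfolding psdf_def
    proof
      fix x
      define C where "C = (\<Sum>a<n. cnj (x a) * P a k)"
      have cC: "(\<Sum>b<n. P k b * x b) = cnj C"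
      proof -
        have "(\<Sum>b<n. P k b * x b) = (\<Sum>b<n. cnj (cnj (x b) * P b k))"
        proof (intro sum.cong refl)
          fix b assume "b \<in> {..<n}"
          hence "P k b = cnj (P b k)" using h k unfolding hermf_def by blast
          thus "P k b * x b = cnj (cnj (x b) * P b k)" by simp
        qed
        thus ?thesis unfolding C_def by (simp add: cnj_sum)
      qed
      have s1: "(\<Sum>a<n. cnj (x a) * c a) = C / of_real q"
        unfolding C_def c_def by (simp add: sum_divide_distrib)
      have s2: "(\<Sum>b<n. cnj (c b) * x b) = cnj C / of_real q"
      proof -
        have "(\<Sum>b<n. cnj (c b) * x b) = cnj (\<Sum>b<n. cnj (x b) * c b)" by (simp add: cnj_sum mult.commute)
        thus ?thesis using s1 by simp
      qed
      have "qf P' n x = qf P n x - (\<Sum>a<n. cnj (x a) * c a) * (\<Sum>b<n. cnj (c b) * x b)"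
        unfolding qf_def P'_def sum_product
        by (simp add: algebra_simps sum_subtractf)
      also have "\<dots> = qf P n x - C * cnj C / of_real p"
        using s1 s2 qp by (simp flip: of_real_mult)
      finally have q1: "qf P' n x = qf P n x - C * cnj C / of_real p" .
      define t where "t = - cnj C / of_real p"
      have "qf P n (\<lambda>i. x i + t * dl k i) = qf P n x + t * C + cnj t * cnj C + cnj t * t * of_real p"
        using qf_expand[OF k, of P x t] cC pk C_def by simp
      also have "\<dots> = qf P n x - C * cnj C / of_real p"
        unfolding t_def using pp by (simp add: field_simps)
      finally have "qf P' n x = qf P n (\<lambda>i. x i + t * dl k i)" using q1 by simp
      thus "0 \<le> Re (qf P' n x)" using ps unfolding psdf_def by simp
    qed
    obtain r where r: "\<forall>a<n. \<forall>b<n. P' a b = (\<Sum>m<k. r m a * cnj (r m b))"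
      using Suc.IH[OF _ h' ps' sup'] k by auto
    show ?thesis
    proof (rule exI[of _ "r(k := c)"], intro allI impI)
      fix a b assume "a < n" "b < n"
      hence "P a b - c a * cnj (c b) = (\<Sum>m<k. r m a * cnj (r m b))"
        using r unfolding P'_def by blast
      hence "P a b = (\<Sum>m<k. r m a * cnj (r m b)) + c a * cnj (c b)"
        by (simp add: diff_eq_eq)
      thus "P a b = (\<Sum>m<Suc k. (r(k := c)) m a * cnj ((r(k := c)) m b))" by simp
    qed
  qed
qed


lemma observable_contr:
  assumes "observable d A"
  shows "(\<Sum>i<d. (cmod (\<Sum>i'<d. A$$(i,i') * x i'))^2) \<le> (\<Sum>i<d. (cmod (x i))^2)"
proof -
  have A: "A \<in> carrier_mat d d" and h: "adj A = A" using assms unfolding observable_def hermitian_def by auto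
  have ev: "cmod l \<le> 1" if "eigenvalue A l" for l
  proof -
    have "l \<in> \<real>" "-1 \<le> Re l" "Re l \<le> 1" using assms that unfolding observable_def by auto
    then obtain u where "l = of_real u" by (auto elim: Reals_cases)
    thus ?thesis using \<open>-1 \<le> Re l\<close> \<open>Re l \<le> 1\<close> by simp
  qed
  define v where "v = vec d x"
  have v: "v \<in> carrier_vec d" unfolding v_def by simp
  have "nrm2 (A *\<^sub>v v) \<le> nrm2 v" by (rule contraction[OF A h ev v])
  have mvx: "(A *\<^sub>v v)$i = (\<Sum>i'<d. A$$(i,i') * x i')" if "i<d" for i
  proof -
    have "(A *\<^sub>v v)$i = (\<Sum>i'<d. A$$(i,i') * v$i')" by (rule mv_index[OF A v that])
    also have "\<dots> = (\<Sum>i'<d. A$$(i,i') * x i')" unfolding v_def by (intro sum.cong) auto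
    finally show ?thesis .
  qed
  moreover have "nrm2 (A *\<^sub>v v) = (\<Sum>i<d. (cmod (\<Sum>i'<d. A$$(i,i') * x i'))^2)"
    unfolding nrm2_def using A by (intro sum.cong) (simp_all add: mvx del: index_mult_mat_vec)
  moreover have "nrm2 v = (\<Sum>i<d. (cmod (x i))^2)" unfolding nrm2_def v_def by simp
  ultimately show ?thesis using contraction[OF A h ev v] by simp
qed

lemma amgm: assumes t: "t > 0" shows "Re (cnj u * w) \<le> (t * (cmod u)^2 + (cmod w)^2 / t) / 2"
proof -
  let ?a = "cmod u" and ?b = "cmod w"
  have "Re (cnj u * w) \<le> cmod (cnj u * w)" by (rule complex_Re_le_cmod)
  also have "\<dots> = ?a * ?b" by (simp add: norm_mult)
  also have "?a * ?b \<le> (t * ?a^2 + ?b^2 / t) / 2"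
  proof -
    have "0 \<le> (t * ?a - ?b)^2 / t" using t by simp
    also have "(t * ?a - ?b)^2 / t = t * ?a^2 - 2 * ?a * ?b + ?b^2 / t"
      using t by (simp add: power2_diff field_simps power2_eq_square)
    finally show ?thesis by simp
  qed
  finally show ?thesis .
qed


lemma sum_swap13: "(\<Sum>a\<in>A. \<Sum>j\<in>J. \<Sum>b\<in>B. f a j b) = (\<Sum>b\<in>B. \<Sum>j\<in>J. \<Sum>a\<in>A. f a j b)"
proof -
  have "(\<Sum>a\<in>A. \<Sum>j\<in>J. \<Sum>b\<in>B. f a j b) = (\<Sum>a\<in>A. \<Sum>b\<in>B. \<Sum>j\<in>J. f a j b)"
    by (intro sum.cong refl) (rule sum.swap)
  also have "\<dots> = (\<Sum>b\<in>B. \<Sum>a\<in>A. \<Sum>j\<in>J. f a j b)" by (rule sum.swap)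
  also have "\<dots> = (\<Sum>b\<in>B. \<Sum>j\<in>J. \<Sum>a\<in>A. f a j b)"
    by (intro sum.cong refl) (rule sum.swap)
  finally show ?thesis .
qed

lemma sum_rot: "(\<Sum>a\<in>A. \<Sum>b\<in>B. \<Sum>c\<in>C. f a b c) = (\<Sum>b\<in>B. \<Sum>c\<in>C. \<Sum>a\<in>A. f a b c)"
proof -
  have "(\<Sum>a\<in>A. \<Sum>b\<in>B. \<Sum>c\<in>C. f a b c) = (\<Sum>b\<in>B. \<Sum>a\<in>A. \<Sum>c\<in>C. f a b c)"
    by (rule sum.swap)
  also have "\<dots> = (\<Sum>b\<in>B. \<Sum>c\<in>C. \<Sum>a\<in>A. f a b c)"
    by (rule sum.cong[OF refl]) (rule sum.swap)
  finally show ?thesis .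
qed

lemma cmod_sq_cnj: "complex_of_real ((cmod w)^2) = cnj w * w"
  by (simp only: complex_norm_square mult.commute)

lemma orth_sum:
  fixes G :: "nat \<Rightarrow> nat \<Rightarrow> real" and y :: "nat \<Rightarrow> complex"
  assumes fin: "finite I1" "finite I2"
    and orth: "\<And>x2 x2'. x2 \<in> I2 \<Longrightarrow> x2' \<in> I2 \<Longrightarrow> (\<Sum>x1\<in>I1. G x1 x2 * G x1 x2') = (if x2 = x2' then c else 0)"
  shows "(\<Sum>x1\<in>I1. (cmod (\<Sum>x2\<in>I2. of_real (G x1 x2) * y x2))^2) = c * (\<Sum>x2\<in>I2. (cmod (y x2))^2)"
proof -
  have "complex_of_real (\<Sum>x1\<in>I1. (cmod (\<Sum>x2\<in>I2. of_real (G x1 x2) * y x2))^2)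
      = (\<Sum>x1\<in>I1. cnj (\<Sum>x2\<in>I2. of_real (G x1 x2) * y x2) * (\<Sum>x2\<in>I2. of_real (G x1 x2) * y x2))"
    unfolding of_real_sum by (intro sum.cong refl) (rule cmod_sq_cnj)
  also have "\<dots> = (\<Sum>x1\<in>I1. \<Sum>x2\<in>I2. \<Sum>x2'\<in>I2. of_real (G x1 x2 * G x1 x2') * (cnj (y x2) * y x2'))"
    unfolding cnj_sum sum_product by (intro sum.cong refl) (simp add: ac_simps)
  also have "\<dots> = (\<Sum>x2\<in>I2. \<Sum>x1\<in>I1. \<Sum>x2'\<in>I2. of_real (G x1 x2 * G x1 x2') * (cnj (y x2) * y x2'))"
    by (rule sum.swap)
  also have "\<dots> = (\<Sum>x2\<in>I2. \<Sum>x2'\<in>I2. \<Sum>x1\<in>I1. of_real (G x1 x2 * G x1 x2') * (cnj (y x2) * y x2'))"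
    by (rule sum.cong[OF refl]) (rule sum.swap)
  also have "\<dots> = (\<Sum>x2\<in>I2. \<Sum>x2'\<in>I2. of_real (\<Sum>x1\<in>I1. G x1 x2 * G x1 x2') * (cnj (y x2) * y x2'))"
    unfolding of_real_sum sum_distrib_right by simp
  also have "\<dots> = (\<Sum>x2\<in>I2. \<Sum>x2'\<in>I2. if x2 = x2' then of_real c * (cnj (y x2) * y x2') else 0)"
    by (intro sum.cong refl) (simp add: orth)
  also have "\<dots> = (\<Sum>x2\<in>I2. of_real c * (cnj (y x2) * y x2))"
    using fin by (intro sum.cong refl) (simp add: sum.delta)
  also have "\<dots> = complex_of_real (c * (\<Sum>x2\<in>I2. (cmod (y x2))^2))"
    unfolding of_real_mult of_real_sum sum_distrib_left by (intro sum.cong refl) (simp only: cmod_sq_cnj)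
  finally show ?thesis by (simp only: of_real_eq_iff)
qed


definition fn2 :: "nat \<Rightarrow> nat \<Rightarrow> (nat \<Rightarrow> nat \<Rightarrow> complex) \<Rightarrow> real" where
  "fn2 d1 d2 U = (\<Sum>i<d1. \<Sum>j<d2. (cmod (U i j))^2)"

lemma fn2_nonneg: "fn2 d1 d2 U \<ge> 0" unfolding fn2_def by (intro sum_nonneg) auto

lemma obs_herm_entry: assumes "observable d A" "i < d" "j < d"
  shows "cnj (A $$ (i,j)) = A $$ (j,i)"
proof -
  have A: "A \<in> carrier_mat d d" and h: "adj A = A" using assms(1) unfolding observable_def hermitian_def by auto
  show ?thesis using adj_entry[OF h A assms(3,2)] by simp
qed

lemma re_bound:
  assumes t: "t > 0"
  shows "Re (\<Sum>i<d1. \<Sum>j<d2. cnj (X i j) * Z i j) \<le> (t * fn2 d1 d2 X + fn2 d1 d2 Z / t) / 2"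
proof -
  have "Re (\<Sum>i<d1. \<Sum>j<d2. cnj (X i j) * Z i j) = (\<Sum>i<d1. \<Sum>j<d2. Re (cnj (X i j) * Z i j))"
    by (simp add: Re_sum)
  also have "\<dots> \<le> (\<Sum>i<d1. \<Sum>j<d2. (t * (cmod (X i j))^2 + (cmod (Z i j))^2 / t) / 2)"
    by (intro sum_mono amgm t)
  also have "\<dots> = (t * fn2 d1 d2 X + fn2 d1 d2 Z / t) / 2"
    unfolding fn2_def by (simp add: sum.distrib sum_divide_distrib sum_distrib_left add_divide_distrib)
  finally show ?thesis .
qed

lemma pure_bound:
  fixes A B :: "nat \<Rightarrow> complex mat" and G :: "nat \<Rightarrow> nat \<Rightarrow> real" and R :: "nat \<Rightarrow> nat \<Rightarrow> complex"
  assumes obsA: "\<And>x1. x1 \<in> I1 \<Longrightarrow> observable d1 (A x1)"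
    and obsB: "\<And>x2. x2 \<in> I2 \<Longrightarrow> observable d2 (B x2)"
    and fin: "finite I1" "finite I2" and ne: "I2 \<noteq> {}"
    and orth: "\<And>x2 x2'. x2 \<in> I2 \<Longrightarrow> x2' \<in> I2 \<Longrightarrow> (\<Sum>x1\<in>I1. G x1 x2 * G x1 x2') = (if x2 = x2' then real (card I1) else 0)"
  shows "(\<Sum>x1\<in>I1. \<Sum>x2\<in>I2. G x1 x2 * Re (\<Sum>i<d1. \<Sum>j<d2. \<Sum>i'<d1. \<Sum>j'<d2.
            cnj (R i j) * (A x1 $$ (i,i') * B x2 $$ (j,j')) * R i' j'))
     \<le> real (card I1) * sqrt (real (card I2)) * fn2 d1 d2 R"
proof -
  define c1 where "c1 = real (card I1)"
  define c2 where "c2 = real (card I2)"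
  define N where "N = fn2 d1 d2 R"
  have c2p: "c2 > 0" unfolding c2_def using fin ne by (simp add: card_gt_0_iff)
  define t where "t = sqrt c2"
  have tp: "t > 0" unfolding t_def using c2p by simp
  define X where "X x1 i j = (\<Sum>i'<d1. A x1 $$ (i,i') * R i' j)" for x1 i j
  define Y where "Y x2 i j = (\<Sum>j'<d2. B x2 $$ (j,j') * R i j')" for x2 i j
  define Z where "Z x1 i j = (\<Sum>x2\<in>I2. of_real (G x1 x2) * Y x2 i j)" for x1 i j
  define T where "T x1 x2 = (\<Sum>i<d1. \<Sum>j<d2. \<Sum>i'<d1. \<Sum>j'<d2.
            cnj (R i j) * (A x1 $$ (i,i') * B x2 $$ (j,j')) * R i' j')" for x1 x2
  have step1: "T x1 x2 = (\<Sum>i<d1. \<Sum>j<d2. cnj (X x1 i j) * Y x2 i j)" if x1: "x1 \<in> I1" for x1 x2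
  proof -
    define F where "F a j b = (\<Sum>j'<d2. cnj (R a j) * (A x1 $$ (a,b) * B x2 $$ (j,j')) * R b j')" for a j b
    have "T x1 x2 = (\<Sum>a<d1. \<Sum>j<d2. \<Sum>b<d1. F a j b)" unfolding T_def F_def by simp
    also have "\<dots> = (\<Sum>b<d1. \<Sum>j<d2. \<Sum>a<d1. F a j b)" by (rule sum_swap13)
    also have "\<dots> = (\<Sum>i<d1. \<Sum>j<d2. cnj (X x1 i j) * Y x2 i j)"
    proof (intro sum.cong refl)
      fix i j assume i: "i \<in> {..<d1}" and j: "j \<in> {..<d2}"
      have "cnj (X x1 i j) * Y x2 i j = (\<Sum>a<d1. \<Sum>j'<d2. cnj (A x1 $$ (i,a) * R a j) * (B x2 $$ (j,j') * R i j'))"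
        unfolding X_def Y_def cnj_sum sum_product ..
      also have "\<dots> = (\<Sum>a<d1. F a j i)"
        unfolding F_def
      proof (intro sum.cong refl)
        fix a j' assume a: "a \<in> {..<d1}"
        have "cnj (A x1 $$ (i,a)) = A x1 $$ (a,i)" using obs_herm_entry[OF obsA[OF x1]] a i by simp
        thus "cnj (A x1 $$ (i,a) * R a j) * (B x2 $$ (j,j') * R i j') =
              cnj (R a j) * (A x1 $$ (a,i) * B x2 $$ (j,j')) * R i j'" by (simp add: ac_simps)
      qed
      finally show "(\<Sum>a<d1. F a j i) = cnj (X x1 i j) * Y x2 i j" by simp
    qed
    finally show ?thesis .
  qed
  have step2: "(\<Sum>x2\<in>I2. G x1 x2 * Re (T x1 x2)) = Re (\<Sum>i<d1. \<Sum>j<d2. cnj (X x1 i j) * Z x1 i j)"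
    if x1: "x1 \<in> I1" for x1
  proof -
    have "(\<Sum>x2\<in>I2. G x1 x2 * Re (T x1 x2)) = Re (\<Sum>x2\<in>I2. of_real (G x1 x2) * T x1 x2)"
      by (simp add: Re_sum)
    also have "(\<Sum>x2\<in>I2. of_real (G x1 x2) * T x1 x2)
        = (\<Sum>x2\<in>I2. \<Sum>i<d1. \<Sum>j<d2. of_real (G x1 x2) * (cnj (X x1 i j) * Y x2 i j))"
      by (simp add: step1[OF x1] sum_distrib_left)
    also have "\<dots> = (\<Sum>i<d1. \<Sum>j<d2. \<Sum>x2\<in>I2. of_real (G x1 x2) * (cnj (X x1 i j) * Y x2 i j))"
      by (rule sum_rot)
    also have "\<dots> = (\<Sum>i<d1. \<Sum>j<d2. cnj (X x1 i j) * Z x1 i j)"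
      unfolding Z_def sum_distrib_left by (intro sum.cong refl) (simp add: ac_simps)
    finally show ?thesis .
  qed
  have step4: "fn2 d1 d2 (X x1) \<le> N" if x1: "x1 \<in> I1" for x1
  proof -
    have "fn2 d1 d2 (X x1) = (\<Sum>j<d2. \<Sum>i<d1. (cmod (\<Sum>i'<d1. A x1 $$ (i,i') * R i' j))^2)"
      unfolding fn2_def X_def by (rule sum.swap)
    also have "\<dots> \<le> (\<Sum>j<d2. \<Sum>i<d1. (cmod (R i j))^2)"
      by (intro sum_mono observable_contr obsA x1)
    also have "\<dots> = N" unfolding N_def fn2_def by (rule sum.swap)
    finally show ?thesis .
  qed
  have step6: "fn2 d1 d2 (Y x2) \<le> N" if x2: "x2 \<in> I2" for x2
    unfolding fn2_def Y_def N_def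
    by (intro sum_mono observable_contr obsB x2)
  have step5: "(\<Sum>x1\<in>I1. fn2 d1 d2 (Z x1)) = c1 * (\<Sum>x2\<in>I2. fn2 d1 d2 (Y x2))"
  proof -
    have "(\<Sum>x1\<in>I1. fn2 d1 d2 (Z x1)) = (\<Sum>i<d1. \<Sum>j<d2. \<Sum>x1\<in>I1. (cmod (Z x1 i j))^2)"
      unfolding fn2_def by (rule sum_rot)
    also have "\<dots> = (\<Sum>i<d1. \<Sum>j<d2. c1 * (\<Sum>x2\<in>I2. (cmod (Y x2 i j))^2))"
      unfolding Z_def c1_def by (intro sum.cong refl orth_sum fin orth) auto
    also have "\<dots> = c1 * (\<Sum>x2\<in>I2. \<Sum>i<d1. \<Sum>j<d2. (cmod (Y x2 i j))^2)"
      unfolding sum_distrib_left[symmetric] by (subst sum_rot) (rule refl)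
    finally show ?thesis unfolding fn2_def by simp
  qed
  have "(\<Sum>x1\<in>I1. \<Sum>x2\<in>I2. G x1 x2 * Re (T x1 x2))
      \<le> (\<Sum>x1\<in>I1. (t * N + fn2 d1 d2 (Z x1) / t) / 2)"
  proof (intro sum_mono)
    fix x1 assume x1: "x1 \<in> I1"
    have "(\<Sum>x2\<in>I2. G x1 x2 * Re (T x1 x2)) \<le> (t * fn2 d1 d2 (X x1) + fn2 d1 d2 (Z x1) / t) / 2"
      unfolding step2[OF x1] by (rule re_bound[OF tp])
    also have "\<dots> \<le> (t * N + fn2 d1 d2 (Z x1) / t) / 2"
      using step4[OF x1] tp by (simp add: divide_right_mono)
    finally show "(\<Sum>x2\<in>I2. G x1 x2 * Re (T x1 x2)) \<le> (t * N + fn2 d1 d2 (Z x1) / t) / 2" .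
  qed
  also have "\<dots> = (c1 * t * N + (\<Sum>x1\<in>I1. fn2 d1 d2 (Z x1)) / t) / 2"
    unfolding c1_def by (simp add: sum.distrib sum_divide_distrib[symmetric] add_divide_distrib)
  also have "\<dots> = (c1 * t * N + c1 * (\<Sum>x2\<in>I2. fn2 d1 d2 (Y x2)) / t) / 2" by (simp add: step5)
  also have "\<dots> \<le> (c1 * t * N + c1 * (c2 * N) / t) / 2"
  proof -
    have "(\<Sum>x2\<in>I2. fn2 d1 d2 (Y x2)) \<le> (\<Sum>x2\<in>I2. N)" by (intro sum_mono step6)
    hence "(\<Sum>x2\<in>I2. fn2 d1 d2 (Y x2)) \<le> c2 * N" unfolding c2_def by simp
    moreover have "c1 \<ge> 0" unfolding c1_def by simp
    ultimately have "c1 * (\<Sum>x2\<in>I2. fn2 d1 d2 (Y x2)) \<le> c1 * (c2 * N)" by (rule mult_left_mono)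
    thus ?thesis using tp by (simp add: divide_right_mono)
  qed
  also have "\<dots> = c1 * sqrt c2 * N"
  proof -
    have "c2 / t = t" unfolding t_def using c2p by (simp add: real_div_sqrt)
    have "c1 * (c2 * N) / t = (c1 * N) * (c2 / t)" by simp
    hence "c1 * (c2 * N) / t = c1 * t * N" using \<open>c2 / t = t\<close> by simp
    thus ?thesis unfolding t_def by simp
  qed
  finally show ?thesis unfolding T_def c1_def c2_def N_def .
qed


lemma sum_split_add: fixes a b :: nat shows "(\<Sum>i<a+b. f i) = (\<Sum>i<a. f i) + (\<Sum>i<b. f (a+i))"
  by (induction b) (simp_all add: add.assoc)

lemma sum_prod_index: fixes d1 d2 :: nat shows "(\<Sum>p<d1*d2. f p) = (\<Sum>i<d1. \<Sum>j<d2. f (i*d2 + j))"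
proof (induction d1)
  case 0 thus ?case by simp
next
  case (Suc d1)
  have "(\<Sum>p<Suc d1 * d2. f p) = (\<Sum>p<d1*d2 + d2. f p)" by (simp add: add.commute)
  also have "\<dots> = (\<Sum>p<d1*d2. f p) + (\<Sum>j<d2. f (d1*d2 + j))" by (rule sum_split_add)
  finally show ?case using Suc by simp
qed

lemma idx_bound: "i < d1 \<Longrightarrow> j < (d2::nat) \<Longrightarrow> i*d2 + j < d1*d2"
proof -
  assume "i < d1" "j < d2"
  hence "i*d2 + j < i*d2 + d2" by simp
  also have "\<dots> = Suc i * d2" by simp
  also have "\<dots> \<le> d1 * d2" using \<open>i < d1\<close> by (intro mult_right_mono) auto
  finally show ?thesis .
qed

lemma qf_kron: assumes A: "A \<in> carrier_mat d1 d1" and B: "B \<in> carrier_mat d2 d2"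
  shows "qf (\<lambda>a b. kron A B $$ (a,b)) (d1*d2) x =
    (\<Sum>i<d1. \<Sum>j<d2. \<Sum>i'<d1. \<Sum>j'<d2. cnj (x (i*d2+j)) * (A$$(i,i') * B$$(j,j')) * x (i'*d2+j'))"
proof -
  have e: "kron A B $$ (i*d2+j, i'*d2+j') = A$$(i,i') * B$$(j,j')"
    if "i<d1" "j<d2" "i'<d1" "j'<d2" for i j i' j'
    using that A B idx_bound[of i d1 j d2] idx_bound[of i' d1 j' d2] by (simp add: kron_def)
  show ?thesis unfolding qf_def sum_prod_index
    by (intro sum.cong refl) (simp add: e)
qed

lemma sum_1_n: "(\<Sum>x\<in>{1..n}. f x) = (\<Sum>i<n. f (Suc i))"
  by (simp add: sum.atLeast1_atMost_eq)

lemma density_decomp: assumes d: "density_op N \<rho>"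
  shows "\<exists>r. (\<forall>K \<in> carrier_mat N N. mtrace (\<rho> * K) = (\<Sum>m<N. qf (\<lambda>a b. K$$(a,b)) N (r m)))
             \<and> (\<Sum>m<N. \<Sum>a<N. (cmod (r m a))^2) = 1"
proof -
  have rc: "\<rho> \<in> carrier_mat N N" and h: "adj \<rho> = \<rho>" and tr: "mtrace \<rho> = 1"
    and ps: "\<And>v::complex vec. v \<in> carrier_vec N \<Longrightarrow> 0 \<le> Re (conjugate v \<bullet> (\<rho> *\<^sub>v v))"
    using d unfolding density_op_def hermitian_def by auto
  define P where "P a b = \<rho> $$ (a,b)" for a b
  have hP: "hermf P N" unfolding hermf_def P_def using adj_entry[OF h rc] by blast
  have pP: "psdf P N" unfolding psdf_def
  proof
    fix x :: "nat \<Rightarrow> complex"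
    define v where "v = vec N x"
    have v: "v \<in> carrier_vec N" unfolding v_def by simp
    have "conjugate v \<bullet> (\<rho> *\<^sub>v v) = (\<Sum>a<N. cnj (x a) * (\<Sum>b<N. P a b * x b))"
    proof -
      have "conjugate v \<bullet> (\<rho> *\<^sub>v v) = (\<Sum>a<N. conjugate v $ a * (\<rho> *\<^sub>v v) $ a)"
        using rc by (simp add: scalar_prod_def lessThan_atLeast0 del: index_mult_mat_vec)
      also have "\<dots> = (\<Sum>a<N. cnj (x a) * (\<Sum>b<N. P a b * x b))"
      proof (intro sum.cong refl)
        fix a assume a: "a \<in> {..<N}"
        have "(\<rho> *\<^sub>v v) $ a = (\<Sum>b<N. \<rho>$$(a,b) * v$b)" using mv_index[OF rc v] a by simp
        also have "\<dots> = (\<Sum>b<N. P a b * x b)" unfolding P_def v_def by (intro sum.cong) auto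
        finally show "conjugate v $ a * (\<rho> *\<^sub>v v) $ a = cnj (x a) * (\<Sum>b<N. P a b * x b)"
          using a v by (simp add: v_def)
      qed
      finally show ?thesis .
    qed
    also have "\<dots> = qf P N x" unfolding qf_def sum_distrib_left by (simp add: mult.assoc)
    finally show "0 \<le> Re (qf P N x)" using ps[OF v] by simp
  qed
  obtain r where r: "\<forall>a<N. \<forall>b<N. P a b = (\<Sum>m<N. r m a * cnj (r m b))"
    using chol_aux[of N N P] hP pP by auto
  have trK: "mtrace (\<rho> * K) = (\<Sum>m<N. qf (\<lambda>a b. K$$(a,b)) N (r m))" if K: "K \<in> carrier_mat N N" for K
  proof -
    have "mtrace (\<rho> * K) = (\<Sum>a<N. \<Sum>b<N. P a b * K$$(b,a))"
      unfolding mtrace_def P_def using rc K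
      by (intro sum.cong) (auto simp: scalar_prod_def lessThan_atLeast0 intro!: sum.cong)
    also have "\<dots> = (\<Sum>a<N. \<Sum>b<N. \<Sum>m<N. cnj (r m b) * K$$(b,a) * r m a)"
    proof (intro sum.cong refl)
      fix a b assume a: "a \<in> {..<N}" and b: "b \<in> {..<N}"
      show "P a b * K$$(b,a) = (\<Sum>m<N. cnj (r m b) * K$$(b,a) * r m a)"
        using a b unfolding r[rule_format, of a b, OF _ ] 
        by (simp add: r sum_distrib_right) (intro sum.cong refl, simp add: ac_simps)
    qed
    also have "\<dots> = (\<Sum>m<N. \<Sum>b<N. \<Sum>a<N. cnj (r m b) * K$$(b,a) * r m a)"
      by (rule sum_swap13)
    also have "\<dots> = (\<Sum>m<N. qf (\<lambda>a b. K$$(a,b)) N (r m))" unfolding qf_def by simp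
    finally show ?thesis .
  qed
  have "complex_of_real (\<Sum>m<N. \<Sum>a<N. (cmod (r m a))^2) = (\<Sum>a<N. \<Sum>m<N. r m a * cnj (r m a))"
    unfolding of_real_sum by (subst sum.swap) (intro sum.cong refl, simp only: cmod_sq_cnj mult.commute)
  also have "\<dots> = mtrace \<rho>" unfolding mtrace_def using rc r P_def by simp
  finally have "(\<Sum>m<N. \<Sum>a<N. (cmod (r m a))^2) = 1" using tr by (simp only: of_real_eq_1_iff)
  thus ?thesis using trK by blast
qed


lemma kron_carrier: "A \<in> carrier_mat a a \<Longrightarrow> B \<in> carrier_mat b b \<Longrightarrow> kron A B \<in> carrier_mat (a*b) (a*b)"
  unfolding kron_def by auto

lemma g_orth: assumes M2: "M2 \<ge> 1" and x2: "x2 \<in> {1..M2}" and x2': "x2' \<in> {1..M2}"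
  shows "(\<Sum>x1\<in>{1..2^(M2-1)}. g_mat M2 $$ (x1-1, x2-1) * g_mat M2 $$ (x1-1, x2'-1))
     = (if x2 = x2' then real (card {1..(2::nat)^(M2-1)}) else 0)"
proof -
  have a: "x2 - 1 < Suc (M2-1)" "x2' - 1 < Suc (M2-1)" using x2 x2' M2 by auto
  have "(\<Sum>x1\<in>{1..2^(M2-1)}. g_mat M2 $$ (x1-1, x2-1) * g_mat M2 $$ (x1-1, x2'-1))
      = (\<Sum>i<2^(M2-1). g_mat M2 $$ (i, x2-1) * g_mat M2 $$ (i, x2'-1))"
    unfolding sum_1_n by simp
  also have "\<dots> = (\<Sum>i<2^(M2-1). sg i (x2-1) * sg i (x2'-1))"
  proof (intro sum.cong refl)
    fix i :: nat assume "i \<in> {..<2^(M2-1)}"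
    moreover have "x2 - 1 < M2" "x2' - 1 < M2" using x2 x2' by auto
    ultimately show "g_mat M2 $$ (i, x2-1) * g_mat M2 $$ (i, x2'-1) = sg i (x2-1) * sg i (x2'-1)"
      by (simp add: g_mat_entry)
  qed
  also have "\<dots> = (if x2 - 1 = x2' - 1 then 2^(M2-1) else 0)" by (rule sg_orth[OF a])
  also have "\<dots> = (if x2 = x2' then real (card {1..(2::nat)^(M2-1)}) else 0)"
    using x2 x2' by auto
  finally show ?thesis .
qed

lemma value_upper:
  assumes M2: "M2 \<ge> 1" and qs: "quantum_strategy (2^(M2-1)) M2 d1 d2 \<rho> A1 A2"
  shows "strategy_value (g_mat M2) \<rho> A1 A2 \<le> real (2^(M2-1)) * sqrt (real M2)"
proof -
  define M1 :: nat where "M1 = 2^(M2-1)"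
  define N where "N = d1 * d2"
  have dens: "density_op N \<rho>" and oA: "\<And>x1. x1 \<in> {1..M1} \<Longrightarrow> observable d1 (A1 x1)"
    and oB: "\<And>x2. x2 \<in> {1..M2} \<Longrightarrow> observable d2 (A2 x2)"
    using qs unfolding quantum_strategy_def M1_def N_def by auto
  obtain r where tr: "\<And>K. K \<in> carrier_mat N N \<Longrightarrow> mtrace (\<rho> * K) = (\<Sum>m<N. qf (\<lambda>a b. K$$(a,b)) N (r m))"
    and one: "(\<Sum>m<N. \<Sum>a<N. (cmod (r m a))^2) = 1"
    using density_decomp[OF dens] by blast
  define R where "R m i j = r m (i*d2 + j)" for m i j
  define G where "G x1 x2 = g_mat M2 $$ (x1-1, x2-1)" for x1 x2
  define T where "T m x1 x2 = (\<Sum>i<d1. \<Sum>j<d2. \<Sum>i'<d1. \<Sum>j'<d2.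
            cnj (R m i j) * (A1 x1 $$ (i,i') * A2 x2 $$ (j,j')) * R m i' j')" for m x1 x2
  have trT: "mtrace (\<rho> * kron (A1 x1) (A2 x2)) = (\<Sum>m<N. T m x1 x2)"
    if x1: "x1 \<in> {1..M1}" and x2: "x2 \<in> {1..M2}" for x1 x2
  proof -
    have ca: "A1 x1 \<in> carrier_mat d1 d1" using oA[OF x1] unfolding observable_def by auto
    have cb: "A2 x2 \<in> carrier_mat d2 d2" using oB[OF x2] unfolding observable_def by auto
    have "mtrace (\<rho> * kron (A1 x1) (A2 x2)) = (\<Sum>m<N. qf (\<lambda>a b. kron (A1 x1) (A2 x2) $$ (a,b)) N (r m))"
      using tr kron_carrier[OF ca cb] unfolding N_def by blast
    also have "\<dots> = (\<Sum>m<N. T m x1 x2)"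
      unfolding N_def T_def R_def by (intro sum.cong refl qf_kron[OF ca cb])
    finally show ?thesis .
  qed
  have "strategy_value (g_mat M2) \<rho> A1 A2
      = (\<Sum>x1\<in>{1..M1}. \<Sum>x2\<in>{1..M2}. G x1 x2 * Re (\<Sum>m<N. T m x1 x2))"
    unfolding strategy_value_def G_def g_mat_dims M1_def[symmetric]
    by (intro sum.cong refl) (simp add: trT)
  also have "\<dots> = (\<Sum>m<N. \<Sum>x1\<in>{1..M1}. \<Sum>x2\<in>{1..M2}. G x1 x2 * Re (T m x1 x2))"
    unfolding Re_sum sum_distrib_left by (rule sum_rot[symmetric])
  also have "\<dots> \<le> (\<Sum>m<N. real (card {1..M1}) * sqrt (real (card {1..M2})) * fn2 d1 d2 (R m))"
  proof (intro sum_mono)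
    fix m
    show "(\<Sum>x1\<in>{1..M1}. \<Sum>x2\<in>{1..M2}. G x1 x2 * Re (T m x1 x2))
         \<le> real (card {1..M1}) * sqrt (real (card {1..M2})) * fn2 d1 d2 (R m)"
      unfolding T_def
    proof (rule pure_bound[OF oA oB])
      show "{1..M2} \<noteq> {}" using M2 by simp
      fix x2 x2' assume "x2 \<in> {1..M2}" "x2' \<in> {1..M2}"
      thus "(\<Sum>x1\<in>{1..M1}. G x1 x2 * G x1 x2') = (if x2 = x2' then real (card {1..M1}) else 0)"
        unfolding G_def M1_def by (rule g_orth[OF M2])
    qed auto
  qed
  also have "\<dots> = real M1 * sqrt (real M2) * (\<Sum>m<N. fn2 d1 d2 (R m))"
    by (simp add: sum_distrib_left)
  also have "(\<Sum>m<N. fn2 d1 d2 (R m)) = 1"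
    unfolding one[symmetric] fn2_def R_def N_def sum_prod_index ..
  finally show ?thesis unfolding M1_def by simp
qed


lemma mult_entry: assumes "A \<in> carrier_mat n m" "B \<in> carrier_mat m p" "i < n" "j < p"
  shows "(A * B) $$ (i,j) = (\<Sum>k<m. A$$(i,k) * B$$(k,j))"
  using assms by (auto simp: scalar_prod_def lessThan_atLeast0 intro!: sum.cong)

lemma kron_entry: assumes "A \<in> carrier_mat a a" "B \<in> carrier_mat b b" "p < a*b" "q < a*b"
  shows "kron A B $$ (p,q) = A $$ (p div b, q div b) * B $$ (p mod b, q mod b)"
  using assms unfolding kron_def by auto

lemma divmod_bounds: assumes "p < a*(b::nat)" shows "p div b < a" "p mod b < b"
proof -
  show "p div b < a" using assms by (simp add: less_mult_imp_div_less mult.commute)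
  have "b > 0" using assms by (cases b) auto
  thus "p mod b < b" by simp
qed

lemma kron_mult:
  assumes A: "A \<in> carrier_mat a a" and C: "C \<in> carrier_mat a a"
    and B: "B \<in> carrier_mat b b" and D: "D \<in> carrier_mat b b"
  shows "kron A B * kron C D = kron (A * C) (B * D)"
proof (rule eq_matI)
  have kAB: "kron A B \<in> carrier_mat (a*b) (a*b)" by (rule kron_carrier[OF A B])
  have kCD: "kron C D \<in> carrier_mat (a*b) (a*b)" by (rule kron_carrier[OF C D])
  have AC: "A * C \<in> carrier_mat a a" using A C by simp
  have BD: "B * D \<in> carrier_mat b b" using B D by simp
  have kACBD: "kron (A*C) (B*D) \<in> carrier_mat (a*b) (a*b)" by (rule kron_carrier[OF AC BD])
  show "dim_row (kron A B * kron C D) = dim_row (kron (A * C) (B * D))" using kAB kACBD by simp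
  show "dim_col (kron A B * kron C D) = dim_col (kron (A * C) (B * D))" using kCD kACBD by simp
  fix p q assume "p < dim_row (kron (A * C) (B * D))" "q < dim_col (kron (A * C) (B * D))"
  hence p: "p < a*b" and q: "q < a*b" using kACBD by auto
  have pd: "p div b < a" "p mod b < b" using divmod_bounds[OF p] by auto
  have qd: "q div b < a" "q mod b < b" using divmod_bounds[OF q] by auto
  have "(kron A B * kron C D) $$ (p,q) = (\<Sum>s<a*b. kron A B $$ (p,s) * kron C D $$ (s,q))"
    by (rule mult_entry[OF kAB kCD p q])
  also have "\<dots> = (\<Sum>k<a. \<Sum>l<b. kron A B $$ (p,k*b+l) * kron C D $$ (k*b+l,q))"
    by (rule sum_prod_index)
  also have "\<dots> = (\<Sum>k<a. \<Sum>l<b. (A$$(p div b, k) * C$$(k, q div b)) * (B$$(p mod b, l) * D$$(l, q mod b)))"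
  proof (intro sum.cong refl)
    fix k l assume k: "k \<in> {..<a}" and l: "l \<in> {..<b}"
    have kl: "k*b+l < a*b" using idx_bound[of k a l b] k l by simp
    have "(k*b+l) div b = k" "(k*b+l) mod b = l" using l by auto
    thus "kron A B $$ (p,k*b+l) * kron C D $$ (k*b+l,q) =
          (A$$(p div b, k) * C$$(k, q div b)) * (B$$(p mod b, l) * D$$(l, q mod b))"
      using kron_entry[OF A B p kl] kron_entry[OF C D kl q] by (simp add: ac_simps)
  qed
  also have "\<dots> = (\<Sum>k<a. A$$(p div b, k) * C$$(k, q div b)) * (\<Sum>l<b. B$$(p mod b, l) * D$$(l, q mod b))"
    by (simp add: sum_product)
  also have "\<dots> = (A*C) $$ (p div b, q div b) * (B*D) $$ (p mod b, q mod b)"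
    using mult_entry[OF A C pd(1) qd(1)] mult_entry[OF B D pd(2) qd(2)] by simp
  also have "\<dots> = kron (A*C) (B*D) $$ (p,q)" using kron_entry[OF AC BD p q] by simp
  finally show "(kron A B * kron C D) $$ (p,q) = kron (A*C) (B*D) $$ (p,q)" .
qed

lemma kron_adj: assumes A: "A \<in> carrier_mat a a" and B: "B \<in> carrier_mat b b"
  shows "adj (kron A B) = kron (adj A) (adj B)"
proof -
  have aA: "adj A \<in> carrier_mat a a" and aB: "adj B \<in> carrier_mat b b" using A B by (auto simp: adj_def)
  have k1: "kron A B \<in> carrier_mat (a*b) (a*b)" by (rule kron_carrier[OF A B])
  have k2: "kron (adj A) (adj B) \<in> carrier_mat (a*b) (a*b)" by (rule kron_carrier[OF aA aB])
  show ?thesis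
  proof (rule eq_matI)
    fix p q assume "p < dim_row (kron (adj A) (adj B))" "q < dim_col (kron (adj A) (adj B))"
    hence p: "p < a*b" and q: "q < a*b" using k2 by auto
    have pd: "p div b < a" "p mod b < b" using divmod_bounds[OF p] by auto
    have qd: "q div b < a" "q mod b < b" using divmod_bounds[OF q] by auto
    have "adj (kron A B) $$ (p,q) = cnj (kron A B $$ (q,p))" using k1 p q by (simp add: adj_def)
    also have "\<dots> = cnj (A $$ (q div b, p div b)) * cnj (B $$ (q mod b, p mod b))"
      using kron_entry[OF A B q p] by simp
    also have "\<dots> = adj A $$ (p div b, q div b) * adj B $$ (p mod b, q mod b)"
      using A B pd qd by (simp add: adj_def)
    also have "\<dots> = kron (adj A) (adj B) $$ (p,q)" using kron_entry[OF aA aB p q] by simp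
    finally show "adj (kron A B) $$ (p,q) = kron (adj A) (adj B) $$ (p,q)" .
  qed (use k1 k2 in \<open>auto simp: adj_def\<close>)
qed

lemma kron_one: "kron (1\<^sub>m a) (1\<^sub>m b) = 1\<^sub>m (a*b)"
proof (rule eq_matI)
  fix p q assume "p < dim_row (1\<^sub>m (a*b))" "q < dim_col (1\<^sub>m (a*b))"
  hence p: "p < a*b" and q: "q < a*b" by auto
  have pd: "p div b < a" "p mod b < b" using divmod_bounds[OF p] by auto
  have qd: "q div b < a" "q mod b < b" using divmod_bounds[OF q] by auto
  have "(p div b = q div b \<and> p mod b = q mod b) = (p = q)"
    by (metis div_mult_mod_eq)
  thus "kron (1\<^sub>m a) (1\<^sub>m b) $$ (p,q) = 1\<^sub>m (a*b) $$ (p,q)"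
    using kron_entry[of "1\<^sub>m a" a "1\<^sub>m b" b p q] p q pd qd by auto
qed (auto simp: kron_def)

lemma kron_uminus: assumes "A \<in> carrier_mat a a" "B \<in> carrier_mat b b"
  shows "kron (- A) B = - kron A B"
  using assms by (intro eq_matI) (auto simp: kron_def divmod_bounds)


lemma kron_uminus_r: assumes "A \<in> carrier_mat a a" "B \<in> carrier_mat b b"
  shows "kron A (- B) = - kron A B"
  using assms by (intro eq_matI) (auto simp: kron_def divmod_bounds)

definition Zm :: "complex mat" where
  "Zm = mat 2 2 (\<lambda>(i,j). if i = j then (if i = 0 then 1 else -1) else 0)"
definition Xm :: "complex mat" where
  "Xm = mat 2 2 (\<lambda>(i,j). if i = j then 0 else 1)"

lemma sum2: "(\<Sum>k<2. f k) = f 0 + f (1::nat)" by (simp add: numeral_2_eq_2)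

lemma less2: "(i::nat) < 2 \<longleftrightarrow> i = 0 \<or> i = 1" by auto

lemma Zm_c: "Zm \<in> carrier_mat 2 2" and Xm_c: "Xm \<in> carrier_mat 2 2"
  by (simp_all add: Zm_def Xm_def)

lemma ZZ: "Zm * Zm = 1\<^sub>m 2"
  by (rule eq_matI) (auto simp: mult_entry[OF Zm_c Zm_c] sum2 less2, auto simp: Zm_def)

lemma XX: "Xm * Xm = 1\<^sub>m 2"
  by (rule eq_matI) (auto simp: mult_entry[OF Xm_c Xm_c] sum2 less2, auto simp: Xm_def)

lemma XZ: "Xm * Zm = - (Zm * Xm)"
proof (rule eq_matI)
  fix i j assume "i < dim_row (- (Zm * Xm))" "j < dim_col (- (Zm * Xm))"
  hence i: "i < 2" and j: "j < 2" using Zm_c Xm_c by auto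
  have "(Xm * Zm) $$ (i,j) = (\<Sum>k<2. Xm$$(i,k) * Zm$$(k,j))" by (rule mult_entry[OF Xm_c Zm_c i j])
  moreover have "(- (Zm * Xm)) $$ (i,j) = - (\<Sum>k<2. Zm$$(i,k) * Xm$$(k,j))"
    using mult_entry[OF Zm_c Xm_c i j] i j Zm_c Xm_c by simp
  ultimately show "(Xm * Zm) $$ (i,j) = (- (Zm * Xm)) $$ (i,j)"
    using i j unfolding sum2 less2 by (auto simp: Zm_def Xm_def)
qed (use Zm_c Xm_c in auto)

lemma adjZ: "adj Zm = Zm" by (rule eq_matI) (auto simp: adj_def Zm_def less2)
lemma adjX: "adj Xm = Xm" by (rule eq_matI) (auto simp: adj_def Xm_def less2)
lemma adj_one: "adj (1\<^sub>m m) = 1\<^sub>m m" by (rule eq_matI) (auto simp: adj_def)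

fun cl :: "nat \<Rightarrow> nat \<Rightarrow> complex mat" where
  "cl 0 j = 1\<^sub>m 1"
| "cl (Suc n) j = (if j < n then kron Zm (cl n j) else kron Xm (1\<^sub>m (2^n)))"

lemma cl_carrier: "cl n j \<in> carrier_mat (2^n) (2^n)"
proof (induction n)
  case 0 thus ?case by simp
next
  case (Suc n)
  have a: "kron Zm (cl n j) \<in> carrier_mat (2 * 2^n) (2 * 2^n)" by (rule kron_carrier[OF Zm_c Suc])
  have b: "kron Xm (1\<^sub>m (2^n)) \<in> carrier_mat (2 * 2^n) (2 * 2^n)" by (rule kron_carrier[OF Xm_c]) simp
  show ?case using a b by simp
qed

lemma cl_herm: "adj (cl n j) = cl n j"
proof (induction n)
  case 0 thus ?case by (simp add: adj_one)
next
  case (Suc n)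
  show ?case using Suc kron_adj[OF Zm_c cl_carrier] kron_adj[OF Xm_c one_carrier_mat]
    by (simp add: adjZ adjX adj_one)
qed

lemma cl_sq: "cl n j * cl n j = 1\<^sub>m (2^n)"
proof (induction n)
  case 0 thus ?case by simp
next
  case (Suc n)
  have a: "kron Zm (cl n j) * kron Zm (cl n j) = 1\<^sub>m (2 * 2^n)"
    using kron_mult[OF Zm_c Zm_c cl_carrier cl_carrier] Suc by (simp add: ZZ kron_one)
  have b: "kron Xm (1\<^sub>m (2^n)) * kron Xm (1\<^sub>m (2^n)) = 1\<^sub>m (2 * 2^n)"
    using kron_mult[OF Xm_c Xm_c one_carrier_mat one_carrier_mat, of "2^n"] by (simp add: XX kron_one)
  show ?case using a b by simp
qed

lemma cl_anti: "j < n \<Longrightarrow> k < n \<Longrightarrow> j \<noteq> k \<Longrightarrow> cl n j * cl n k = - (cl n k * cl n j)"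
proof (induction n arbitrary: j k)
  case 0 thus ?case by simp
next
  case (Suc n)
  have C: "\<And>j. cl n j \<in> carrier_mat (2^n) (2^n)" by (rule cl_carrier)
  have ZXc: "Zm * Xm \<in> carrier_mat 2 2" using Zm_c Xm_c by simp
  have XZc: "Xm * Zm \<in> carrier_mat 2 2" using Zm_c Xm_c by simp
  have I: "1\<^sub>m (2^n) \<in> carrier_mat (2^n) (2^n)" by simp
  show ?case
  proof (cases "j < n")
    case jn: True
    show ?thesis
    proof (cases "k < n")
      case True
      have "cl (Suc n) j * cl (Suc n) k = kron (1\<^sub>m 2) (cl n j * cl n k)"
        using jn True kron_mult[OF Zm_c Zm_c C C] by (simp add: ZZ)
      also have "\<dots> = kron (1\<^sub>m 2) (- (cl n k * cl n j))" using Suc.IH[OF jn True Suc.prems(3)] by (simp only:)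
      also have "\<dots> = - kron (1\<^sub>m 2) (cl n k * cl n j)"
      proof -
        have cc: "cl n k * cl n j \<in> carrier_mat (2^n) (2^n)" using C[of k] C[of j] by simp
        show ?thesis by (rule kron_uminus_r[OF one_carrier_mat cc])
      qed
      also have "kron (1\<^sub>m 2) (cl n k * cl n j) = cl (Suc n) k * cl (Suc n) j"
        using jn True kron_mult[OF Zm_c Zm_c C C] by (simp add: ZZ)
      finally show ?thesis .
    next
      case False
      hence kn: "k = n" using Suc.prems(2) by simp
      have "cl (Suc n) j * cl (Suc n) k = kron (Zm * Xm) (cl n j)"
        using jn kn kron_mult[OF Zm_c Xm_c C I] right_mult_one_mat[OF C] by simp
      moreover have "cl (Suc n) k * cl (Suc n) j = kron (Xm * Zm) (cl n j)"
        using jn kn kron_mult[OF Xm_c Zm_c I C] left_mult_one_mat[OF C] by simp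
      moreover have "kron (Xm * Zm) (cl n j) = - kron (Zm * Xm) (cl n j)"
        unfolding XZ by (rule kron_uminus[OF ZXc C])
      ultimately show ?thesis by simp
    qed
  next
    case False
    hence jn: "j = n" using Suc.prems(1) by simp
    hence kn: "k < n" using Suc.prems by simp
    have "cl (Suc n) j * cl (Suc n) k = kron (Xm * Zm) (cl n k)"
      using jn kn kron_mult[OF Xm_c Zm_c I C] left_mult_one_mat[OF C] by simp
    moreover have "cl (Suc n) k * cl (Suc n) j = kron (Zm * Xm) (cl n k)"
      using jn kn kron_mult[OF Zm_c Xm_c C I] right_mult_one_mat[OF C] by simp
    moreover have "kron (Xm * Zm) (cl n k) = - kron (Zm * Xm) (cl n k)"
      unfolding XZ by (rule kron_uminus[OF ZXc C])
    ultimately show ?thesis by simp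
  qed
qed

lemma mtrace_mult: assumes "A \<in> carrier_mat m m" "B \<in> carrier_mat m m"
  shows "mtrace (A * B) = (\<Sum>i<m. \<Sum>k<m. A$$(i,k) * B$$(k,i))"
proof -
  have d: "dim_row (A*B) = m" using assms by simp
  have "mtrace (A*B) = (\<Sum>i<m. (A*B)$$(i,i))" unfolding mtrace_def d ..
  also have "\<dots> = (\<Sum>i<m. \<Sum>k<m. A$$(i,k) * B$$(k,i))"
    by (rule sum.cong[OF refl], rule mult_entry[OF assms], simp, simp)
  finally show ?thesis .
qed

lemma mtrace_comm: assumes "A \<in> carrier_mat m m" "B \<in> carrier_mat m m"
  shows "mtrace (A * B) = mtrace (B * A)"
  unfolding mtrace_mult[OF assms] mtrace_mult[OF assms(2,1)]
  by (subst sum.swap) (simp add: mult.commute)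

lemma mtrace_uminus: "M \<in> carrier_mat m m \<Longrightarrow> mtrace (- M) = - mtrace M"
  unfolding mtrace_def by (simp add: sum_negf)

lemma mtrace_one: "mtrace (1\<^sub>m m) = of_nat m"
  unfolding mtrace_def by simp

lemma tr_cl: assumes "j < n" "k < n"
  shows "mtrace (cl n j * cl n k) = (if j = k then 2^n else 0)"
proof (cases "j = k")
  case True thus ?thesis using cl_sq[of n j] by (simp add: mtrace_one)
next
  case False
  have c: "cl n j * cl n k \<in> carrier_mat (2^n) (2^n)" using cl_carrier[of n j] cl_carrier[of n k] by simp
  have "mtrace (cl n j * cl n k) = mtrace (cl n k * cl n j)" by (rule mtrace_comm[OF cl_carrier cl_carrier])
  also have "\<dots> = - mtrace (cl n j * cl n k)"
    using cl_anti[OF assms False] mtrace_uminus[OF c] by simp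
  finally have "mtrace (cl n j * cl n k) = 0" by simp
  thus ?thesis using False by simp
qed


lemma obs_of_invol: assumes A: "A \<in> carrier_mat d d" and h: "adj A = A" and sq: "A * A = 1\<^sub>m d"
  shows "observable d A"
  unfolding observable_def hermitian_def
proof (intro conjI allI impI)
  show "A \<in> carrier_mat d d" by (rule A)
  show "A \<in> carrier_mat (dim_row A) (dim_row A)" using A by simp
  show "adj A = A" by (rule h)
  fix l assume "eigenvalue A l"
  then obtain v where v: "v \<in> carrier_vec d" "v \<noteq> 0\<^sub>v d" "A *\<^sub>v v = l \<cdot>\<^sub>v v"
    using A unfolding eigenvalue_def eigenvector_def by auto
  obtain i where i: "i < d" "v $ i \<noteq> 0"
    using v(1,2) by (metis carrier_vecD eq_vecI index_zero_vec(1) index_zero_vec(2))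
  have "v = (A * A) *\<^sub>v v" using sq v(1) by simp
  also have "\<dots> = A *\<^sub>v (A *\<^sub>v v)" by (rule assoc_mult_mat_vec[OF A A v(1)])
  also have "\<dots> = l \<cdot>\<^sub>v (l \<cdot>\<^sub>v v)" unfolding v(3) using mult_mat_vec[OF A v(1)] v(3) by simp
  finally have "v $ i = l * (l * v $ i)" using i v(1) by (metis carrier_vecD index_smult_vec(1) smult_carrier_vec)
  hence "l * l = 1" using i(2) by (metis mult.assoc mult_cancel_right1)
  hence "l = 1 \<or> l = -1" by (simp add: square_eq_1_iff)
  thus "l \<in> \<real>" "-1 \<le> Re l" "Re l \<le> 1" by auto
qed

lemma obs_transpose: assumes "observable d A" "A * A = 1\<^sub>m d"
  shows "observable d (transpose_mat A)"
proof -
  have A: "A \<in> carrier_mat d d" and h: "adj A = A" using assms(1) unfolding observable_def hermitian_def by auto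
  have At: "transpose_mat A \<in> carrier_mat d d" using A by simp
  have ht: "adj (transpose_mat A) = transpose_mat A"
  proof (rule eq_matI)
    fix i j assume "i < dim_row (transpose_mat A)" "j < dim_col (transpose_mat A)"
    hence i: "i < d" and j: "j < d" using A by auto
    have "adj (transpose_mat A) $$ (i,j) = cnj (A $$ (i,j))" using A i j by (simp add: adj_def)
    also have "\<dots> = A $$ (j,i)" using adj_entry[OF h A j i] by simp
    finally show "adj (transpose_mat A) $$ (i,j) = transpose_mat A $$ (i,j)" using A i j by simp
  qed (use A in \<open>auto simp: adj_def\<close>)
  have "transpose_mat A * transpose_mat A = transpose_mat (A * A)" using transpose_mult[OF A A] by simp
  also have "\<dots> = 1\<^sub>m d" using assms(2) by simp
  finally show ?thesis by (rule obs_of_invol[OF At ht])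
qed

definition Aop :: "nat \<Rightarrow> nat \<Rightarrow> complex mat" where
  "Aop n x1 = mat (2^n) (2^n) (\<lambda>(a,b). \<Sum>j<n. complex_of_real (sg (x1-1) j / sqrt (real n)) * cl n j $$ (a,b))"

lemma Aop_c: "Aop n x1 \<in> carrier_mat (2^n) (2^n)" by (simp add: Aop_def)

lemma cl_entry_herm: "a < 2^n \<Longrightarrow> b < 2^n \<Longrightarrow> cnj (cl n j $$ (a,b)) = cl n j $$ (b,a)"
  using adj_entry[OF cl_herm[of n j] cl_carrier[of n j], of b a] by simp

lemma Aop_herm: "adj (Aop n x1) = Aop n x1"
proof (rule eq_matI)
  fix a b assume "a < dim_row (Aop n x1)" "b < dim_col (Aop n x1)"
  hence a: "a < 2^n" and b: "b < 2^n" by (auto simp: Aop_def)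
  have "adj (Aop n x1) $$ (a,b) = cnj (\<Sum>j<n. complex_of_real (sg (x1-1) j / sqrt (real n)) * cl n j $$ (b,a))"
    using a b by (simp add: adj_def Aop_def)
  also have "\<dots> = (\<Sum>j<n. complex_of_real (sg (x1-1) j / sqrt (real n)) * cl n j $$ (a,b))"
    unfolding cnj_sum by (intro sum.cong refl) (simp add: cl_entry_herm a b)
  finally show "adj (Aop n x1) $$ (a,b) = Aop n x1 $$ (a,b)" using a b by (simp add: Aop_def)
qed (auto simp: adj_def Aop_def)

lemma Aop_sq: assumes n: "n \<ge> 1" shows "Aop n x1 * Aop n x1 = 1\<^sub>m (2^n)"
proof (rule eq_matI)
  define d :: nat where "d = 2^n"
  define c where "c j = complex_of_real (sg (x1-1) j / sqrt (real n))" for j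
  fix a b assume "a < dim_row (1\<^sub>m (2^n))" "b < dim_col (1\<^sub>m (2^n))"
  hence a: "a < d" and b: "b < d" unfolding d_def by auto
  define F where "F j k = c j * c k * (cl n j * cl n k) $$ (a,b)" for j k
  have Ae: "Aop n x1 $$ (i,i') = (\<Sum>j<n. c j * cl n j $$ (i,i'))" if "i < d" "i' < d" for i i'
    using that unfolding Aop_def c_def d_def by simp
  have "(Aop n x1 * Aop n x1) $$ (a,b) = (\<Sum>e<d. Aop n x1 $$ (a,e) * Aop n x1 $$ (e,b))"
    using mult_entry[OF Aop_c[of n x1] Aop_c[of n x1], of a b] a b unfolding d_def by simp
  also have "\<dots> = (\<Sum>e<d. (\<Sum>j<n. c j * cl n j $$ (a,e)) * (\<Sum>k<n. c k * cl n k $$ (e,b)))"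
    using a b by (intro sum.cong refl) (simp add: Ae)
  also have "\<dots> = (\<Sum>e<d. \<Sum>j<n. \<Sum>k<n. c j * c k * (cl n j $$ (a,e) * cl n k $$ (e,b)))"
    unfolding sum_product by (intro sum.cong refl) (simp add: ac_simps)
  also have "\<dots> = (\<Sum>j<n. \<Sum>k<n. \<Sum>e<d. c j * c k * (cl n j $$ (a,e) * cl n k $$ (e,b)))"
    by (rule sum_rot)
  also have "\<dots> = (\<Sum>j<n. \<Sum>k<n. F j k)"
  proof (intro sum.cong refl)
    fix j k
    have "(cl n j * cl n k) $$ (a,b) = (\<Sum>e<d. cl n j $$ (a,e) * cl n k $$ (e,b))"
      unfolding d_def by (rule mult_entry[OF cl_carrier cl_carrier]) (use a b d_def in auto)
    thus "(\<Sum>e<d. c j * c k * (cl n j $$ (a,e) * cl n k $$ (e,b))) = F j k"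
      unfolding F_def by (simp add: sum_distrib_left)
  qed
  finally have S: "(Aop n x1 * Aop n x1) $$ (a,b) = (\<Sum>j<n. \<Sum>k<n. F j k)" .
  have pair: "F j k + F k j = (if j = k then 2 * (c j * c j) * 1\<^sub>m d $$ (a,b) else 0)"
    if j: "j < n" and k: "k < n" for j k
  proof (cases "j = k")
    case True thus ?thesis unfolding F_def using cl_sq[of n j] a b by (simp add: d_def)
  next
    case False
    have "(cl n k * cl n j) $$ (a,b) = - ((cl n j * cl n k) $$ (a,b))"
    proof -
      have "cl n k * cl n j = - (cl n j * cl n k)" using cl_anti[OF k j] False by simp
      moreover have "cl n j * cl n k \<in> carrier_mat d d" using cl_carrier[of n j] cl_carrier[of n k] unfolding d_def by simp
      moreover have "(- (cl n j * cl n k)) $$ (a,b) = - ((cl n j * cl n k) $$ (a,b))"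
        using calculation(2) a b by (metis carrier_matD(1,2) index_uminus_mat(1))
      ultimately show ?thesis by simp
    qed
    thus ?thesis unfolding F_def using False by (simp add: ac_simps)
  qed
  have "2 * (\<Sum>j<n. \<Sum>k<n. F j k) = (\<Sum>j<n. \<Sum>k<n. F j k) + (\<Sum>j<n. \<Sum>k<n. F k j)"
    by (subst (2) sum.swap) simp
  also have "\<dots> = (\<Sum>j<n. \<Sum>k<n. F j k + F k j)" by (simp add: sum.distrib)
  also have "\<dots> = (\<Sum>j<n. \<Sum>k<n. if j = k then 2 * (c j * c j) * 1\<^sub>m d $$ (a,b) else 0)"
    by (intro sum.cong refl pair) auto
  also have "\<dots> = (\<Sum>j<n. 2 * (c j * c j) * 1\<^sub>m d $$ (a,b))" by (simp add: sum.delta)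
  also have "\<dots> = 2 * (\<Sum>j<n. c j * c j) * 1\<^sub>m d $$ (a,b)" by (simp add: sum_distrib_left sum_distrib_right)
  also have "(\<Sum>j<n. c j * c j) = 1"
  proof -
    have "(\<Sum>j<n. c j * c j) = (\<Sum>j<n. complex_of_real (1 / real n))"
    proof (intro sum.cong refl)
      fix j
      have "sg (x1-1) j * sg (x1-1) j = 1" by (rule sg_sq)
      hence "(sg (x1-1) j / sqrt (real n)) * (sg (x1-1) j / sqrt (real n)) = 1 / real n"
        using n by (simp add: field_simps)
      thus "c j * c j = complex_of_real (1 / real n)" unfolding c_def by (simp flip: of_real_mult)
    qed
    also have "\<dots> = 1" using n by simp
    finally show ?thesis .
  qed
  finally show "(Aop n x1 * Aop n x1) $$ (a,b) = 1\<^sub>m (2^n) $$ (a,b)" using S d_def by simp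
qed (simp_all add: Aop_def)


definition psi :: "nat \<Rightarrow> nat \<Rightarrow> complex" where
  "psi d p = complex_of_real (1 / sqrt (real d)) * dl (p div d) (p mod d)"

definition rhoD :: "nat \<Rightarrow> complex mat" where
  "rhoD d = mat (d*d) (d*d) (\<lambda>(p,q). psi d p * cnj (psi d q))"

lemma rhoD_c: "rhoD d \<in> carrier_mat (d*d) (d*d)" by (simp add: rhoD_def)

lemma psi_idx: "j < d \<Longrightarrow> psi d (i*d+j) = complex_of_real (1 / sqrt (real d)) * dl i j"
  by (simp add: psi_def)

lemma cnj_dl[simp]: "cnj (dl k i) = dl k i" by (simp add: dl_def)
lemma dl_sq: "dl k i * dl k i = dl k i" by (simp add: dl_def)

lemma rho_density: assumes d: "d > 0" shows "density_op (d*d) (rhoD d)"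
  unfolding density_op_def hermitian_def
proof (intro conjI ballI)
  define D where "D = d*d"
  show c: "rhoD d \<in> carrier_mat (d*d) (d*d)" by (rule rhoD_c)
  thus "rhoD d \<in> carrier_mat (dim_row (rhoD d)) (dim_row (rhoD d))" by simp
  show "adj (rhoD d) = rhoD d"
    by (rule eq_matI) (auto simp: adj_def rhoD_def)
  show "mtrace (rhoD d) = 1"
  proof -
    have "mtrace (rhoD d) = (\<Sum>p<d*d. psi d p * cnj (psi d p))" unfolding mtrace_def rhoD_def by simp
    also have "\<dots> = (\<Sum>i<d. \<Sum>j<d. complex_of_real (1 / real d) * dl i j)"
      unfolding sum_prod_index
    proof (intro sum.cong refl)
      fix i j assume "j \<in> {..<d}"
      hence "psi d (i*d+j) = complex_of_real (1 / sqrt (real d)) * dl i j" by (intro psi_idx) auto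
      moreover have "complex_of_real (1 / sqrt (real d)) * complex_of_real (1 / sqrt (real d)) = complex_of_real (1 / real d)"
        using d by (simp flip: of_real_mult)
      ultimately show "psi d (i*d+j) * cnj (psi d (i*d+j)) = complex_of_real (1 / real d) * dl i j"
        by (simp add: dl_sq ac_simps)
    qed
    also have "\<dots> = (\<Sum>i<d. complex_of_real (1 / real d))"
    proof (intro sum.cong refl)
      fix i assume "i \<in> {..<d}"
      hence "(\<Sum>j<d. dl i j * 1) = 1" by (intro sum_dl_l) auto
      thus "(\<Sum>j<d. complex_of_real (1 / real d) * dl i j) = complex_of_real (1 / real d)"
        by (simp add: sum_divide_distrib[symmetric])
    qed
    also have "\<dots> = 1" using d by simp
    finally show ?thesis .
  qed
  fix v :: "complex vec" assume v: "v \<in> carrier_vec (d*d)"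
  define w where "w = (\<Sum>a<d*d. cnj (v$a) * psi d a)"
  have "conjugate v \<bullet> (rhoD d *\<^sub>v v) = (\<Sum>a<d*d. cnj (v$a) * (\<Sum>b<d*d. psi d a * cnj (psi d b) * v$b))"
  proof -
    have "conjugate v \<bullet> (rhoD d *\<^sub>v v) = (\<Sum>a<d*d. conjugate v $ a * (rhoD d *\<^sub>v v) $ a)"
      using c by (simp add: scalar_prod_def lessThan_atLeast0 del: index_mult_mat_vec)
    also have "\<dots> = (\<Sum>a<d*d. cnj (v$a) * (\<Sum>b<d*d. psi d a * cnj (psi d b) * v$b))"
    proof (intro sum.cong refl)
      fix a assume a: "a \<in> {..<d*d}"
      have "(rhoD d *\<^sub>v v) $ a = (\<Sum>b<d*d. rhoD d $$ (a,b) * v$b)" using mv_index[OF c v] a by simp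
      also have "\<dots> = (\<Sum>b<d*d. psi d a * cnj (psi d b) * v$b)"
        using a by (intro sum.cong refl) (simp add: rhoD_def)
      finally show "conjugate v $ a * (rhoD d *\<^sub>v v) $ a = cnj (v$a) * (\<Sum>b<d*d. psi d a * cnj (psi d b) * v$b)"
        using a v by simp
    qed
    finally show ?thesis .
  qed
  also have "\<dots> = (\<Sum>a<d*d. \<Sum>b<d*d. (cnj (v$a) * psi d a) * (cnj (psi d b) * v$b))"
    unfolding sum_distrib_left by (intro sum.cong refl) (simp add: ac_simps)
  also have "\<dots> = (\<Sum>a<d*d. cnj (v$a) * psi d a) * (\<Sum>b<d*d. cnj (psi d b) * v$b)"
    by (rule sum_product[symmetric])
  also have "\<dots> = w * cnj w" unfolding w_def cnj_sum by (simp add: mult.commute)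
  also have "\<dots> = complex_of_real ((cmod w)^2)" by (rule complex_norm_square[symmetric])
  finally show "0 \<le> Re (conjugate v \<bullet> (rhoD d *\<^sub>v v))" by simp
qed

lemma rho_trace: assumes d: "d > 0" and A: "A \<in> carrier_mat d d" and B: "B \<in> carrier_mat d d"
  shows "mtrace (rhoD d * kron A B) = (\<Sum>i<d. \<Sum>i'<d. A$$(i,i') * B$$(i,i')) / of_nat d"
proof -
  define s where "s = complex_of_real (1 / sqrt (real d))"
  have ss: "cnj s * s = 1 / of_nat d" unfolding s_def using d by (simp flip: of_real_mult)
  have K: "kron A B \<in> carrier_mat (d*d) (d*d)" by (rule kron_carrier[OF A B])
  have "mtrace (rhoD d * kron A B) = (\<Sum>p<d*d. \<Sum>q<d*d. rhoD d $$ (p,q) * kron A B $$ (q,p))"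
    by (rule mtrace_mult[OF rhoD_c K])
  also have "\<dots> = (\<Sum>p<d*d. \<Sum>q<d*d. psi d p * cnj (psi d q) * kron A B $$ (q,p))"
    by (intro sum.cong refl) (simp add: rhoD_def)
  also have "\<dots> = (\<Sum>q<d*d. \<Sum>p<d*d. cnj (psi d q) * kron A B $$ (q,p) * psi d p)"
    by (subst sum.swap) (simp add: ac_simps)
  also have "\<dots> = qf (\<lambda>a b. kron A B $$ (a,b)) (d*d) (psi d)" unfolding qf_def ..
  also have "\<dots> = (\<Sum>i<d. \<Sum>j<d. \<Sum>i'<d. \<Sum>j'<d. cnj (psi d (i*d+j)) * (A$$(i,i') * B$$(j,j')) * psi d (i'*d+j'))"
    by (rule qf_kron[OF A B])
  also have "\<dots> = (\<Sum>i<d. \<Sum>j<d. \<Sum>i'<d. \<Sum>j'<d. (cnj s * dl i j * A$$(i,i') * s) * B$$(j,j') * dl i' j')"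
  proof (intro sum.cong refl)
    fix i j i' j' assume "j \<in> {..<d}" "j' \<in> {..<d}"
    hence jj: "j < d" "j' < d" by auto
    have e1: "psi d (i*d+j) = s * dl i j" unfolding s_def by (rule psi_idx[OF jj(1)])
    have e2: "psi d (i'*d+j') = s * dl i' j'" unfolding s_def by (rule psi_idx[OF jj(2)])
    show "cnj (psi d (i*d+j)) * (A$$(i,i') * B$$(j,j')) * psi d (i'*d+j') =
          (cnj s * dl i j * A$$(i,i') * s) * B$$(j,j') * dl i' j'"
      by (simp only: e1 e2 complex_cnj_mult cnj_dl) (simp add: ac_simps)
  qed
  also have "\<dots> = (\<Sum>i<d. \<Sum>j<d. \<Sum>i'<d. (cnj s * dl i j * A$$(i,i') * s) * B$$(j,i'))"
    by (intro sum.cong refl) (simp add: sum_dl_r)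
  also have "\<dots> = (\<Sum>i<d. \<Sum>i'<d. \<Sum>j<d. dl i j * (cnj s * A$$(i,i') * s * B$$(j,i')))"
    by (rule sum.cong[OF refl], subst sum.swap, intro sum.cong refl, simp add: ac_simps)
  also have "\<dots> = (\<Sum>i<d. \<Sum>i'<d. cnj s * A$$(i,i') * s * B$$(i,i'))"
    by (intro sum.cong refl) (simp add: sum_dl_l)
  also have "\<dots> = (\<Sum>i<d. \<Sum>i'<d. (cnj s * s) * (A$$(i,i') * B$$(i,i')))"
    by (intro sum.cong refl) (simp add: ac_simps)
  also have "\<dots> = (\<Sum>i<d. \<Sum>i'<d. A$$(i,i') * B$$(i,i')) / of_nat d"
    unfolding ss by (simp add: sum_divide_distrib)
  finally show ?thesis .
qed


lemma mtrace_Aop: assumes k: "k < n"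
  shows "mtrace (Aop n x1 * cl n k) = complex_of_real (sg (x1-1) k / sqrt (real n)) * 2^n"
proof -
  define c where "c j = complex_of_real (sg (x1-1) j / sqrt (real n))" for j
  have "mtrace (Aop n x1 * cl n k) = (\<Sum>i<2^n. \<Sum>i'<2^n. Aop n x1 $$ (i,i') * cl n k $$ (i',i))"
    by (rule mtrace_mult[OF Aop_c cl_carrier])
  also have "\<dots> = (\<Sum>i<2^n. \<Sum>i'<2^n. \<Sum>j<n. c j * (cl n j $$ (i,i') * cl n k $$ (i',i)))"
  proof (intro sum.cong refl)
    fix i i' :: nat assume "i \<in> {..<2^n}" "i' \<in> {..<2^n}"
    hence "Aop n x1 $$ (i,i') = (\<Sum>j<n. c j * cl n j $$ (i,i'))" by (simp add: Aop_def c_def)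
    thus "Aop n x1 $$ (i,i') * cl n k $$ (i',i) = (\<Sum>j<n. c j * (cl n j $$ (i,i') * cl n k $$ (i',i)))"
      by (simp add: sum_distrib_right mult.assoc)
  qed
  also have "\<dots> = (\<Sum>j<n. \<Sum>i<2^n. \<Sum>i'<2^n. c j * (cl n j $$ (i,i') * cl n k $$ (i',i)))"
    by (rule sum_rot[symmetric])
  also have "\<dots> = (\<Sum>j<n. c j * mtrace (cl n j * cl n k))"
    by (intro sum.cong refl) (simp add: mtrace_mult[OF cl_carrier cl_carrier] sum_distrib_left)
  also have "\<dots> = (\<Sum>j<n. if j = k then c j * 2^n else 0)"
    by (intro sum.cong refl) (simp add: tr_cl k)
  also have "\<dots> = c k * 2^n" using k by (simp add: sum.delta)
  finally show ?thesis unfolding c_def .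
qed

lemma strat_lower: assumes M2: "M2 \<ge> 1"
  shows "quantum_strategy (2^(M2-1)) M2 (2^M2) (2^M2) (rhoD (2^M2)) (Aop M2) (\<lambda>x2. transpose_mat (cl M2 (x2-1)))"
    and "strategy_value (g_mat M2) (rhoD (2^M2)) (Aop M2) (\<lambda>x2. transpose_mat (cl M2 (x2-1)))
         = real (2^(M2-1)) * sqrt (real M2)"
proof -
  define d :: nat where "d = 2^M2"
  have dp: "d > 0" unfolding d_def by simp
  have obsA: "observable d (Aop M2 x1)" for x1
    unfolding d_def by (rule obs_of_invol[OF Aop_c Aop_herm Aop_sq[OF M2]])
  have obsC: "observable d (cl M2 k)" for k
    unfolding d_def by (rule obs_of_invol[OF cl_carrier cl_herm cl_sq])
  have obsB: "observable d (transpose_mat (cl M2 k))" for k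
    using obs_transpose[OF obsC cl_sq[of M2 k, folded d_def]] .
  show "quantum_strategy (2^(M2-1)) M2 (2^M2) (2^M2) (rhoD (2^M2)) (Aop M2) (\<lambda>x2. transpose_mat (cl M2 (x2-1)))"
    unfolding quantum_strategy_def using rho_density[OF dp] obsA obsB unfolding d_def by blast
  have tm: "Re (mtrace (rhoD d * kron (Aop M2 x1) (transpose_mat (cl M2 (x2-1)))))
      = sg (x1-1) (x2-1) / sqrt (real M2)" if x2: "x2 \<in> {1..M2}" for x1 x2
  proof -
    have k: "x2 - 1 < M2" using x2 by auto
    have Ac: "Aop M2 x1 \<in> carrier_mat d d" unfolding d_def by (rule Aop_c)
    have Bc: "transpose_mat (cl M2 (x2-1)) \<in> carrier_mat d d" unfolding d_def using cl_carrier by simp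
    have Cc: "cl M2 (x2-1) \<in> carrier_mat d d" unfolding d_def by (rule cl_carrier)
    have "mtrace (rhoD d * kron (Aop M2 x1) (transpose_mat (cl M2 (x2-1))))
        = (\<Sum>i<d. \<Sum>i'<d. Aop M2 x1 $$ (i,i') * transpose_mat (cl M2 (x2-1)) $$ (i,i')) / of_nat d"
      by (rule rho_trace[OF dp Ac Bc])
    also have "(\<Sum>i<d. \<Sum>i'<d. Aop M2 x1 $$ (i,i') * transpose_mat (cl M2 (x2-1)) $$ (i,i'))
        = mtrace (Aop M2 x1 * cl M2 (x2-1))"
      unfolding mtrace_mult[OF Ac Cc] using Cc by (intro sum.cong refl) simp
    also have "\<dots> = complex_of_real (sg (x1-1) (x2-1) / sqrt (real M2)) * of_nat d"
      unfolding d_def mtrace_Aop[OF k] by simp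
    finally show ?thesis using dp by simp
  qed
  have "strategy_value (g_mat M2) (rhoD d) (Aop M2) (\<lambda>x2. transpose_mat (cl M2 (x2-1)))
      = (\<Sum>x1\<in>{1..(2::nat)^(M2-1)}. \<Sum>x2\<in>{1..M2}. 1 / sqrt (real M2))"
    unfolding strategy_value_def g_mat_dims
  proof (intro sum.cong refl)
    fix x1 x2 :: nat assume x1: "x1 \<in> {1..2^(M2-1)}" and x2: "x2 \<in> {1..M2}"
    have "x1 - 1 < 2^(M2-1)" "x2 - 1 < M2" using x1 x2 by auto
    hence "g_mat M2 $$ (x1-1, x2-1) = sg (x1-1) (x2-1)" by (rule g_mat_entry)
    thus "g_mat M2 $$ (x1-1, x2-1) * Re (mtrace (rhoD d * kron (Aop M2 x1) (transpose_mat (cl M2 (x2-1)))))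
        = 1 / sqrt (real M2)"
      using tm[OF x2, of x1] sg_sq[of "x1-1" "x2-1"] by (simp add: times_divide_eq_right)
  qed
  also have "\<dots> = real (2^(M2-1)) * (real M2 / sqrt (real M2))" by simp
  also have "real M2 / sqrt (real M2) = sqrt (real M2)" by (simp add: real_div_sqrt)
  finally show "strategy_value (g_mat M2) (rhoD (2^M2)) (Aop M2) (\<lambda>x2. transpose_mat (cl M2 (x2-1)))
         = real (2^(M2-1)) * sqrt (real M2)" unfolding d_def .
qed

theorem mainTheorem10:
  fixes M2 :: nat
  assumes "M2 \<ge> 1"
  defines "M1 \<equiv> (2::nat) ^ (M2 - 1)"
  shows "(\<forall>\<sigma> \<in> singular_values (g_mat M2). \<sigma> = sqrt (real M1))
    \<and> quantum_value (g_mat M2) = ereal (real M1 * sqrt (real M2))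
    \<and> (\<exists>d1 d2 \<rho> A1 A2. quantum_strategy M1 M2 d1 d2 \<rho> A1 A2 \<and>
          strategy_value (g_mat M2) \<rho> A1 A2 = real M1 * sqrt (real M2))"
proof (intro conjI)
  show "\<forall>\<sigma> \<in> singular_values (g_mat M2). \<sigma> = sqrt (real M1)"
    unfolding M1_def using sing_vals[OF assms(1)] by blast
  show ex: "\<exists>d1 d2 \<rho> A1 A2. quantum_strategy M1 M2 d1 d2 \<rho> A1 A2 \<and>
          strategy_value (g_mat M2) \<rho> A1 A2 = real M1 * sqrt (real M2)"
    unfolding M1_def using strat_lower[OF assms(1)] by blast
  show "quantum_value (g_mat M2) = ereal (real M1 * sqrt (real M2))"
    unfolding quantum_value_def g_mat_dims M1_def[symmetric]
  proof (rule antisym)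
    show "(SUP s\<in>{(d1, d2, \<rho>, A1, A2). quantum_strategy M1 M2 d1 d2 \<rho> A1 A2}.
        ereal (case s of (d1, d2, \<rho>, A1, A2) \<Rightarrow> strategy_value (g_mat M2) \<rho> A1 A2))
        \<le> ereal (real M1 * sqrt (real M2))"
    proof (rule SUP_least)
      fix s assume "s \<in> {(d1, d2, \<rho>, A1, A2). quantum_strategy M1 M2 d1 d2 \<rho> A1 A2}"
      then obtain d1 d2 \<rho> A1 A2 where s: "s = (d1, d2, \<rho>, A1, A2)" and q: "quantum_strategy M1 M2 d1 d2 \<rho> A1 A2"
        by auto
      have "strategy_value (g_mat M2) \<rho> A1 A2 \<le> real M1 * sqrt (real M2)"
        using value_upper[OF assms(1), of d1 d2 \<rho> A1 A2] q unfolding M1_def by simp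
      thus "ereal (case s of (d1, d2, \<rho>, A1, A2) \<Rightarrow> strategy_value (g_mat M2) \<rho> A1 A2)
          \<le> ereal (real M1 * sqrt (real M2))" using s by simp
    qed
    obtain d1 d2 \<rho> A1 A2 where q: "quantum_strategy M1 M2 d1 d2 \<rho> A1 A2"
      and v: "strategy_value (g_mat M2) \<rho> A1 A2 = real M1 * sqrt (real M2)" using ex by blast
    have mem: "(d1, d2, \<rho>, A1, A2) \<in> {(d1, d2, \<rho>, A1, A2). quantum_strategy M1 M2 d1 d2 \<rho> A1 A2}"
      using q by simp
    show "ereal (real M1 * sqrt (real M2)) \<le> (SUP s\<in>{(d1, d2, \<rho>, A1, A2). quantum_strategy M1 M2 d1 d2 \<rho> A1 A2}.
        ereal (case s of (d1, d2, \<rho>, A1, A2) \<Rightarrow> strategy_value (g_mat M2) \<rho> A1 A2))"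
      using SUP_upper[OF mem, of "\<lambda>s. ereal (case s of (d1, d2, \<rho>, A1, A2) \<Rightarrow> strategy_value (g_mat M2) \<rho> A1 A2)"] v
      by simp
  qed
qed

end
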